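(* Let $\alpha\in(0,1)$ and let $\theta_0=\mathbf 1_{D_0}$ be a rotating patch of the generalized SQG equation rotating around a point $x_0$ (i.e. $D_t=\mathbf R_{x_0,\varphi(t)}D_0$). Then $x_0$ is the center of mass $\frac{1}{|D_0|}\int_{D_0}x\,dx$ of $D_0$.
   Context: Generalized SQG: $\partial_t\theta+u\cdot\nabla\theta=0$, $u=-\nabla^\perp(-\Delta)^{-1+\frac\alpha2}\theta$, $(-\Delta)^{-1+\frac\alpha2}\theta(x)=\frac{C_\alpha}{2\pi}\int_{\mathbb R^2}\frac{\theta(y)}{|x-y|^\alpha}dy$. A rotating patch: $D_0$ bounded simply connected with smooth boundary such that the patch solution with datum $\mathbf 1_{D_0}$ is $\mathbf 1_{D_t}$, $D_t=\mathbf R_{x_0,\varphi(t)}D_0$, $\mathbf R_{x_0,\varphi}$ the planar rotation of center $x_0$ and angle $\varphi$, $t\mapsto\varphi(t)$ smooth and non-constant. *)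

theory Defs
  imports "HOL-Analysis.Analysis"
begin

text \<open>The plane R^2 is identified with the complex numbers: (x1,x2) = x1 + i x2.\<close>

definition smooth_fun :: "(real \<Rightarrow> 'a::real_normed_vector) \<Rightarrow> bool" where
  "smooth_fun f \<longleftrightarrow> (\<exists>g. g 0 = f \<and>
      (\<forall>k t. (g k has_vector_derivative g (Suc k) t) (at t)))"

definition smooth_jordan_boundary :: "complex set \<Rightarrow> bool" where
  "smooth_jordan_boundary D \<longleftrightarrow> (\<exists>\<gamma>::real \<Rightarrow> complex.
      smooth_fun \<gamma> \<and> (\<forall>t. \<gamma> (t + 1) = \<gamma> t) \<and>
      (\<forall>t. vector_derivative \<gamma> (at t) \<noteq> 0) \<and>
      inj_on \<gamma> {0..<1} \<and> frontier D = \<gamma> ` {0..1})"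

definition rot :: "complex \<Rightarrow> real \<Rightarrow> complex \<Rightarrow> complex" where
  "rot x0 \<phi> z = x0 + cis \<phi> * (z - x0)"

text \<open>Normalisation constant C_alpha of the kernel of (-Delta)^(-1+alpha/2) in R^2.\<close>
definition C_alpha :: "real \<Rightarrow> real" where
  "C_alpha \<alpha> = Gamma (\<alpha> / 2) / (2 powr (1 - \<alpha>) * Gamma (1 - \<alpha> / 2))"

text \<open>Stream function (-Delta)^(-1+alpha/2) 1_D.\<close>
definition stream :: "real \<Rightarrow> complex set \<Rightarrow> complex \<Rightarrow> real" where
  "stream \<alpha> D x = C_alpha \<alpha> / (2 * pi) * (LINT y:D|lborel. norm (x - y) powr (- \<alpha>))"

definition grad :: "(complex \<Rightarrow> real) \<Rightarrow> complex \<Rightarrow> complex" where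
  "grad f x = complex_of_real (frechet_derivative f (at x) 1)
              + \<i> * complex_of_real (frechet_derivative f (at x) \<i>)"

text \<open>Velocity u = - grad^perp of the stream function, where v^perp = (-v2, v1) = i v.\<close>
definition velocity :: "real \<Rightarrow> complex set \<Rightarrow> complex \<Rightarrow> complex" where
  "velocity \<alpha> D x = - (\<i> * grad (stream \<alpha> D) x)"

definition test_fun :: "(complex \<Rightarrow> real) \<Rightarrow> bool" where
  "test_fun \<psi> \<longleftrightarrow> \<psi> differentiable_on UNIV \<and>
     (\<forall>v. continuous_on UNIV (\<lambda>x. frechet_derivative \<psi> (at x) v)) \<and>
     bounded {x. \<psi> x \<noteq> 0}"

text \<open>theta(t) = 1_{D t}, t \<ge> 0, is a (weak) patch solution of gSQG with datum 1_{D 0}: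
  d/dt \<integral> theta psi = \<integral> theta u . grad psi for every test function psi.\<close>
definition gsqg_patch_solution :: "real \<Rightarrow> (real \<Rightarrow> complex set) \<Rightarrow> complex set \<Rightarrow> bool" where
  "gsqg_patch_solution \<alpha> D D0 \<longleftrightarrow> D 0 = D0 \<and>
     (\<forall>t\<ge>0. D t \<in> sets lborel \<and> bounded (D t) \<and>
        (\<forall>x. stream \<alpha> (D t) differentiable (at x))) \<and>
     (\<forall>\<psi>. test_fun \<psi> \<longrightarrow> (\<forall>t\<ge>0.
        ((\<lambda>s. LINT x:D s|lborel. \<psi> x) has_real_derivative
           (LINT x:D t|lborel. velocity \<alpha> (D t) x \<bullet> grad \<psi> x)) (at t within {0..})))"

definition rotating_patch :: "real \<Rightarrow> complex set \<Rightarrow> complex \<Rightarrow> bool" where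
  "rotating_patch \<alpha> D0 x0 \<longleftrightarrow>
     open D0 \<and> bounded D0 \<and> D0 \<noteq> {} \<and> simply_connected D0 \<and> smooth_jordan_boundary D0 \<and>
     (\<exists>\<phi>::real \<Rightarrow> real. smooth_fun \<phi> \<and> \<phi> 0 = 0 \<and>
        (\<exists>t1\<ge>0. \<exists>t2\<ge>0. \<phi> t1 \<noteq> \<phi> t2) \<and>
        gsqg_patch_solution \<alpha> (\<lambda>t. rot x0 (\<phi> t) ` D0) D0)"

end

theory Submission
  imports Defs
begin


lemma unit_ball_vol_2: "unit_ball_vol 2 = pi"
  by (simp add: unit_ball_vol_def Gamma_numeral)

lemma emeasure_ball_complex: "r \<ge> 0 \<Longrightarrow> emeasure lborel (ball (c::complex) r) = ennreal (pi * r^2)"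
  using emeasure_ball[of r c] by (simp add: unit_ball_vol_2)

lemma ennreal_le_suminf: "(f k :: ennreal) \<le> (\<Sum>i. f i)"
proof -
  have "f k \<le> sum f {..<Suc k}" by (simp add: sum.lessThan_Suc)
  also have "\<dots> \<le> (\<Sum>i. f i)" by (intro sum_le_suminf) (auto simp: summableI)
  finally show ?thesis .
qed

lemma p2: "(2::real)^n = 2 powr (real n)" by (simp add: powr_realpow)
lemma e0: "r / 2^Suc k = r * (2::real) powr (-(real k+1))"
proof -
  have "(2::real)^Suc k = 2 powr (real k + 1)" using powr_realpow[of 2 "Suc k"] by (simp add: add.commute)
  then show ?thesis by (simp only: powr_minus divide_inverse)
qed
lemma e1: assumes r: "r > 0" shows "(r / 2^Suc k) powr (-\<beta>) = r powr (-\<beta>) * 2 powr (\<beta> * (real k+1))"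
  using r by (simp only: e0 powr_mult powr_powr) (simp add: powr_mult algebra_simps)
lemma e2: assumes r: "r > 0" shows "(r/2^k)^2 = r powr 2 * 2 powr (- 2 * real k)"
proof -
  have "r/2^k = r * 2 powr (- real k)" by (simp add: powr_minus divide_inverse powr_realpow)
  then have "(r/2^k)^2 = r^2 * (2 powr (- real k))^2" by (simp add: power_mult_distrib)
  also have "(2 powr (- real k))^2 = 2 powr (-2 * real k)"
    by (subst powr_realpow[symmetric]) (simp_all add: powr_powr mult.commute)
  finally show ?thesis using r by (simp add: powr_realpow)
qed
lemma e3: "((2::real) powr (\<beta> - 2))^k = 2 powr ((\<beta> - 2) * k)"
  by (subst powr_realpow[symmetric]) (simp_all add: powr_powr)
lemma e4: assumes r: "r > 0" shows "pi * (r powr (-\<beta>) * r powr 2) * (2 powr (\<beta> * (real k+1)) * 2 powr (- 2 * real k)) =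
   pi * r powr (2 - \<beta>) * (2 powr \<beta> * 2 powr ((\<beta> - 2) * k))"
proof -
  have "r powr (-\<beta>) * r powr 2 = r powr (2 - \<beta>)" by (simp only: powr_add[symmetric]) simp
  moreover have "2 powr (\<beta> * (real k+1)) * 2 powr (- 2 * real k) = (2::real) powr \<beta> * 2 powr ((\<beta> - 2) * k)"
  proof -
    have "2 powr (\<beta> * (real k+1)) * 2 powr (- 2 * real k) = (2::real) powr (\<beta> * (real k+1) + - 2 * real k)"
      by (simp only: powr_add)
    also have "\<beta> * (real k+1) + - 2 * real k = \<beta> + (\<beta> - 2) * k" by (simp add: algebra_simps)
    finally show ?thesis by (simp only: powr_add)
  qed
  ultimately show ?thesis by simp
qed

lemma ball_powr_bound:
  fixes \<beta> r :: real
  assumes b0: "0 \<le> \<beta>" and b2: "\<beta> < 2" and r: "r > 0"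
  shows "(\<integral>\<^sup>+z. indicator (ball (0::complex) r) z * ennreal (norm z powr (-\<beta>)) \<partial>lborel)
     \<le> ennreal (pi * 2 powr \<beta> / (1 - 2 powr (\<beta> - 2)) * r powr (2 - \<beta>))"
proof -
  define A where "A k = {z::complex. r / 2^Suc k \<le> norm z \<and> norm z < r / 2^k}" for k
  define f where "f z = ennreal (norm z powr (-\<beta>))" for z :: complex
  have Ameas[measurable]: "A k \<in> sets lborel" for k unfolding A_def by measurable
  have pt: "indicator (ball 0 r) z * f z \<le> (\<Sum>k. indicator (A k) z * f z)" for z
  proof (cases "z = 0")
    case True then show ?thesis by (simp add: f_def)
  next
    case False
    show ?thesis
    proof (cases "z \<in> ball 0 r")
      case False then show ?thesis by simp
    next
      case True
      have nz: "norm z > 0" using \<open>z \<noteq> 0\<close> by simp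
      have nr: "norm z < r" using True by simp
      obtain k where k: "z \<in> A k"
      proof -
        have "\<exists>n. r / 2^n \<le> norm z"
        proof -
          obtain n where "r / norm z < 2^n" using real_arch_pow[of 2 "r / norm z"] by auto
          then have "r < 2^n * norm z" using nz by (simp add: field_simps)
          then show ?thesis by (intro exI[of _ n]) (simp add: field_simps)
        qed
        then have ex: "\<exists>n. r / 2^n \<le> norm z" .
        define n where "n = (LEAST n. r / 2^n \<le> norm z)"
        have n1: "r / 2^n \<le> norm z" unfolding n_def by (rule LeastI_ex[OF ex])
        have n0: "n \<noteq> 0" using n1 nr by (intro notI) simp
        then obtain k where kn: "n = Suc k" by (cases n) auto
        have "\<not> r / 2^k \<le> norm z" using not_less_Least[of k "\<lambda>n. r / 2^n \<le> norm z"] kn n_def by simp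
        then have "z \<in> A k" using n1 kn by (simp add: A_def)
        then show ?thesis by (rule that)
      qed
      have "indicator (ball 0 r) z * f z = indicator (A k) z * f z" using True k by simp
      also have "\<dots> \<le> (\<Sum>k. indicator (A k) z * f z)" by (rule ennreal_le_suminf)
      finally show ?thesis .
    qed
  qed
  define c where "c = pi * 2 powr \<beta> * r powr (2 - \<beta>)"
  define q where "q = (2::real) powr (\<beta> - 2)"
  have q0: "0 \<le> q" and q1: "q < 1" unfolding q_def using b2 by (auto intro: powr_less_one)
  have trm: "(\<integral>\<^sup>+z. indicator (A k) z * f z \<partial>lborel) \<le> ennreal (c * q^k)" for k
  proof -
    have "(\<integral>\<^sup>+z. indicator (A k) z * f z \<partial>lborel) \<le>
          (\<integral>\<^sup>+z. ennreal ((r / 2^Suc k) powr (-\<beta>)) * indicator (ball (0::complex) (r/2^k)) z \<partial>lborel)"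
    proof (rule nn_integral_mono)
      fix z :: complex
      assume "z \<in> space lborel"
      show "indicator (A k) z * f z \<le> ennreal ((r / 2^Suc k) powr (-\<beta>)) * indicator (ball 0 (r/2^k)) z"
      proof (cases "z \<in> A k")
        case True
        then have z1: "r / 2^Suc k \<le> norm z" and z2: "norm z < r / 2^k" by (auto simp: A_def)
        have pos: "0 < r / 2^Suc k" using r by simp
        have "norm z powr (-\<beta>) \<le> (r / 2^Suc k) powr (-\<beta>)"
          using z1 pos b0 by (intro powr_mono2') auto
        then show ?thesis using True z2 by (simp add: f_def)
      qed simp
    qed
    also have "\<dots> = ennreal ((r / 2^Suc k) powr (-\<beta>)) * emeasure lborel (ball (0::complex) (r/2^k))"
      by (subst nn_integral_cmult) (auto simp: nn_integral_indicator borel_measurable_indicator)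
    also have "\<dots> = ennreal ((r / 2^Suc k) powr (-\<beta>) * (pi * (r/2^k)^2))"
      using r by (simp add: emeasure_ball_complex ennreal_mult)
    also have "(r / 2^Suc k) powr (-\<beta>) * (pi * (r/2^k)^2) = c * q^k"
    proof -
      have "(r / 2^Suc k) powr (-\<beta>) * (pi * (r/2^k)^2) = pi * (r powr (-\<beta>) * r powr 2) * (2 powr (\<beta> * (real k+1)) * 2 powr (- 2 * real k))"
        by (simp only: e1[OF r] e2[OF r]) (simp only: mult_ac)
      also have "\<dots> = pi * r powr (2 - \<beta>) * (2 powr \<beta> * 2 powr ((\<beta> - 2) * k))" by (rule e4[OF r])
      also have "\<dots> = c * q^k" by (simp only: c_def q_def e3) (simp only: mult_ac)
      finally show ?thesis .
    qed
    finally show ?thesis .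
  qed
  have "(\<integral>\<^sup>+z. indicator (ball (0::complex) r) z * ennreal (norm z powr (-\<beta>)) \<partial>lborel)
        \<le> (\<integral>\<^sup>+z. (\<Sum>k. indicator (A k) z * f z) \<partial>lborel)"
    using pt by (intro nn_integral_mono) (simp add: f_def)
  also have "\<dots> = (\<Sum>k. \<integral>\<^sup>+z. indicator (A k) z * f z \<partial>lborel)"
    by (intro nn_integral_suminf) (simp add: f_def)
  also have "\<dots> \<le> (\<Sum>k. ennreal (c * q^k))"
    by (intro suminf_le) (auto intro: trm simp: summableI)
  also have "\<dots> = ennreal (c / (1 - q))"
  proof (rule suminf_ennreal_eq)
    show "0 \<le> c * q^k" for k using q0 by (simp add: c_def)
    show "(\<lambda>k. c * q^k) sums (c / (1 - q))"
      using geometric_sums[of q] q0 q1 sums_mult[of _ _ c] by (simp add: divide_inverse)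
  qed
  also have "c / (1 - q) = pi * 2 powr \<beta> / (1 - 2 powr (\<beta> - 2)) * r powr (2 - \<beta>)"
    by (simp add: c_def q_def)
  finally show ?thesis .
qed


lemma powr_neg_lipschitz_aux:
  fixes a b m \<alpha> :: real
  assumes m: "0 < m" "m \<le> a" "a \<le> b" and al: "0 \<le> \<alpha>"
  shows "\<bar>a powr (-\<alpha>) - b powr (-\<alpha>)\<bar> \<le> \<alpha> * m powr (-\<alpha>-1) * \<bar>a - b\<bar>"
proof (cases "a < b")
  case False then have "a = b" using m by simp
  then show ?thesis by simp
next
  case True
  have der: "DERIV (\<lambda>t. t powr (-\<alpha>)) x :> (-\<alpha>) * x powr (-\<alpha> - 1)" if "a \<le> x" for x
    using has_real_derivative_powr[of x "-\<alpha>"] that m by simp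
  obtain z where z: "a < z" "z < b" and eq: "b powr (-\<alpha>) - a powr (-\<alpha>) = (b - a) * ((-\<alpha>) * z powr (-\<alpha> - 1))"
    using MVT2[OF True, of "\<lambda>t. t powr (-\<alpha>)" "\<lambda>x. (-\<alpha>) * x powr (-\<alpha> - 1)"] der by blast
  have zp: "z powr (-\<alpha>-1) \<le> m powr (-\<alpha>-1)"
    using z m al by (intro powr_mono2') auto
  have "\<bar>a powr (-\<alpha>) - b powr (-\<alpha>)\<bar> = (b - a) * (\<alpha> * z powr (-\<alpha> - 1))"
  proof -
    have e: "a powr (-\<alpha>) - b powr (-\<alpha>) = (b - a) * (\<alpha> * z powr (-\<alpha> - 1))"
      using eq by (simp add: algebra_simps)
    have "0 \<le> (b - a) * (\<alpha> * z powr (-\<alpha> - 1))" using True al by simp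
    then show ?thesis by (simp add: e)
  qed
  also have "\<dots> \<le> (b - a) * (\<alpha> * m powr (-\<alpha> - 1))"
    using True al zp by (intro mult_left_mono) auto
  finally show ?thesis using True by (simp add: abs_if mult_ac)
qed

lemma powr_neg_lipschitz:
  fixes a b m \<alpha> :: real
  assumes m: "0 < m" "m \<le> a" "m \<le> b" and al: "0 \<le> \<alpha>"
  shows "\<bar>a powr (-\<alpha>) - b powr (-\<alpha>)\<bar> \<le> \<alpha> * m powr (-\<alpha>-1) * \<bar>a - b\<bar>"
proof (cases "a \<le> b")
  case True then show ?thesis using powr_neg_lipschitz_aux[OF m(1,2) True al] by simp
next
  case False then show ?thesis using powr_neg_lipschitz_aux[OF m(1,3) _ al, of a] 
    by (simp add: abs_minus_commute)
qed

lemma nn_integral_translate: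
  fixes h :: "'a::euclidean_space"
  assumes [measurable]: "g \<in> borel_measurable borel"
  shows "(\<integral>\<^sup>+z. g (z + h) \<partial>lborel) = integral\<^sup>N lborel g"
proof -
  have "integral\<^sup>N lborel g = integral\<^sup>N (distr lborel borel ((+) h)) g"
    by (simp add: lborel_distr_plus)
  also have "\<dots> = (\<integral>\<^sup>+z. g (h + z) \<partial>lborel)"
    by (subst nn_integral_distr) auto
  finally show ?thesis by (simp add: add.commute)
qed

definition Bc :: "real \<Rightarrow> real" where
  "Bc \<beta> = pi * 2 powr \<beta> / (1 - 2 powr (\<beta> - 2))"

lemma Bc_nonneg: "\<beta> < 2 \<Longrightarrow> 0 \<le> Bc \<beta>"
  unfolding Bc_def by (intro divide_nonneg_pos) (auto intro: powr_less_one)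


lemma ind_ennreal: "indicator S x * ennreal y = ennreal (indicator S x * y)"
  by (simp add: indicator_def)

lemma ball_powr_bound':
  fixes \<beta> r :: real
  assumes "0 \<le> \<beta>" "\<beta> < 2" "r > 0"
  shows "(\<integral>\<^sup>+z. ennreal (indicator (ball (0::complex) r) z * norm z powr (-\<beta>)) \<partial>lborel)
     \<le> ennreal (Bc \<beta> * r powr (2 - \<beta>))"
  using ball_powr_bound[OF assms] by (simp add: ind_ennreal Bc_def)

lemma kernel_pointwise:
  fixes \<alpha> R \<delta> :: real and z h :: complex
  assumes a0: "0 < \<alpha>" and a1: "\<alpha> < 1" and d: "\<delta> = norm h" "0 < \<delta>"
  shows "indicator (ball 0 R) z * \<bar>norm (z+h) powr (-\<alpha>) - norm z powr (-\<alpha>)\<bar>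
    \<le> indicator (ball 0 (3*\<delta>)) (z+h) * norm (z+h) powr (-\<alpha>) + indicator (ball 0 (2*\<delta>)) z * norm z powr (-\<alpha>)
      + (\<alpha> * \<delta> * 2 powr (\<alpha>+1)) * (indicator (ball 0 R) z * norm z powr (-(\<alpha>+1)))"
proof (cases "norm z < 2*\<delta>")
  case True
  have "norm (z+h) \<le> norm z + norm h" by (rule norm_triangle_ineq)
  then have zh: "norm (z+h) < 3*\<delta>" using True d by simp
  have "indicator (ball 0 R) z * \<bar>norm (z+h) powr (-\<alpha>) - norm z powr (-\<alpha>)\<bar> \<le> \<bar>norm (z+h) powr (-\<alpha>) - norm z powr (-\<alpha>)\<bar>"
    by (simp add: indicator_def)
  also have "\<dots> \<le> norm (z+h) powr (-\<alpha>) + norm z powr (-\<alpha>)"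
    using powr_ge_zero[of "norm (z+h)" "-\<alpha>"] powr_ge_zero[of "norm z" "-\<alpha>"] by linarith
  also have "\<dots> = indicator (ball 0 (3*\<delta>)) (z+h) * norm (z+h) powr (-\<alpha>) + indicator (ball 0 (2*\<delta>)) z * norm z powr (-\<alpha>)"
    using zh True by simp
  also have "\<dots> \<le> \<dots> + (\<alpha> * \<delta> * 2 powr (\<alpha>+1)) * (indicator (ball 0 R) z * norm z powr (-(\<alpha>+1)))"
    using a0 d by simp
  finally show ?thesis .
next
  case False
  show ?thesis
  proof (cases "z \<in> ball 0 R")
    case False then show ?thesis using a0 d by simp
  next
    case True
    define m where "m = norm z / 2"
    have m0: "0 < m" using False d unfolding m_def by linarith
    have "norm z - norm h \<le> norm (z+h)" using norm_diff_ineq[of z h] by simp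
    then have m1: "m \<le> norm (z+h)" using False d by (simp add: m_def)
    have m2: "m \<le> norm z" using m0 by (simp add: m_def)
    have "\<bar>norm (z+h) powr (-\<alpha>) - norm z powr (-\<alpha>)\<bar> \<le> \<alpha> * m powr (-\<alpha>-1) * \<bar>norm (z+h) - norm z\<bar>"
      using powr_neg_lipschitz[OF m0 m1 m2] a0 by simp
    also have "\<bar>norm (z+h) - norm z\<bar> \<le> \<delta>"
      using norm_triangle_ineq3[of "z+h" z] d by simp
    then have "\<alpha> * m powr (-\<alpha>-1) * \<bar>norm (z+h) - norm z\<bar> \<le> \<alpha> * m powr (-\<alpha>-1) * \<delta>"
      using a0 by (intro mult_left_mono) auto
    also have "m powr (-\<alpha>-1) = norm z powr (-(\<alpha>+1)) * 2 powr (\<alpha>+1)"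
    proof -
      have ee: "-\<alpha>-1 = -(\<alpha>+1)" by simp
      have "m powr (-\<alpha>-1) = norm z powr (-\<alpha>-1) / 2 powr (-\<alpha>-1)" unfolding m_def by (rule powr_divide)
      also have "\<dots> = norm z powr (-(\<alpha>+1)) / inverse (2 powr (\<alpha>+1))" by (simp only: ee powr_minus)
      finally show ?thesis by (simp only: divide_inverse inverse_inverse_eq)
    qed
    finally have "\<bar>norm (z+h) powr (-\<alpha>) - norm z powr (-\<alpha>)\<bar> \<le> (\<alpha> * \<delta> * 2 powr (\<alpha>+1)) * (norm z powr (-(\<alpha>+1)))"
      by (simp add: mult_ac)
    moreover have "0 \<le> indicator (ball 0 (3*\<delta>)) (z+h) * norm (z+h) powr (-\<alpha>) + indicator (ball 0 (2*\<delta>)) z * norm z powr (-\<alpha>)"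
      by simp
    moreover have "indicator (ball 0 R) z = (1::real)" using True by simp
    ultimately show ?thesis by (simp only: mult_1_left)
  qed
qed


lemma norm_powr_meas[measurable]: "(\<lambda>z::'a::euclidean_space. norm z powr a) \<in> borel_measurable borel"
  by measurable

lemma ball_borel_meas[measurable]: "ball (c::'a::euclidean_space) r \<in> sets borel"
  by simp

lemma kernel_diff_bound:
  fixes \<alpha> R :: real
  assumes a0: "0 < \<alpha>" and a1: "\<alpha> < 1" and R: "R > 0"
  shows "\<exists>C\<ge>0. \<forall>h::complex. norm h \<le> 1 \<longrightarrow>
     (\<integral>\<^sup>+z. ennreal (indicator (ball 0 R) z * \<bar>norm (z+h) powr (-\<alpha>) - norm z powr (-\<alpha>)\<bar>) \<partial>lborel)
       \<le> ennreal (C * norm h)"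
proof -
  define C where "C = 13 * Bc \<alpha> + 4 * (Bc (\<alpha>+1) * R powr (2 - (\<alpha>+1)))"
  have B0: "0 \<le> Bc \<alpha>" "0 \<le> Bc (\<alpha>+1)" using a1 by (auto intro: Bc_nonneg)
  have C0: "C \<ge> 0" unfolding C_def using B0 by simp
  show ?thesis
  proof (intro exI[of _ C] conjI allI impI C0)
    fix h :: complex assume h1: "norm h \<le> 1"
    show "(\<integral>\<^sup>+z. ennreal (indicator (ball 0 R) z * \<bar>norm (z+h) powr (-\<alpha>) - norm z powr (-\<alpha>)\<bar>) \<partial>lborel)
       \<le> ennreal (C * norm h)"
    proof (cases "h = 0")
      case True then show ?thesis by simp
    next
      case False
      define \<delta> where "\<delta> = norm h"
      have d0: "0 < \<delta>" using False by (simp add: \<delta>_def)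
      define c3 where "c3 = \<alpha> * \<delta> * 2 powr (\<alpha>+1)"
      have c30: "0 \<le> c3" using a0 d0 by (simp add: c3_def)
      define g1 where "g1 z = indicator (ball 0 (3*\<delta>)) z * norm z powr (-\<alpha>)" for z :: complex
      define g2 where "g2 z = indicator (ball 0 (2*\<delta>)) z * norm z powr (-\<alpha>)" for z :: complex
      define g3 where "g3 z = indicator (ball 0 R) z * norm z powr (-(\<alpha>+1))" for z :: complex
      have [measurable]: "g1 \<in> borel_measurable borel" "g2 \<in> borel_measurable borel" "g3 \<in> borel_measurable borel"
        unfolding g1_def g2_def g3_def by measurable
      have "(\<integral>\<^sup>+z. ennreal (indicator (ball 0 R) z * \<bar>norm (z+h) powr (-\<alpha>) - norm z powr (-\<alpha>)\<bar>) \<partial>lborel)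
          \<le> (\<integral>\<^sup>+z. (ennreal (g1 (z+h)) + ennreal (g2 z)) + ennreal c3 * ennreal (g3 z) \<partial>lborel)"
      proof (rule nn_integral_mono)
        fix z :: complex
        have "indicator (ball 0 R) z * \<bar>norm (z+h) powr (-\<alpha>) - norm z powr (-\<alpha>)\<bar>
           \<le> g1 (z+h) + g2 z + c3 * g3 z"
          using kernel_pointwise[OF a0 a1 \<delta>_def d0, of R z] unfolding g1_def g2_def g3_def c3_def .
        moreover have "0 \<le> g1 (z+h)" "0 \<le> g2 z" "0 \<le> g3 z"
          unfolding g1_def g2_def g3_def by auto
        ultimately show "ennreal (indicator (ball 0 R) z * \<bar>norm (z+h) powr (-\<alpha>) - norm z powr (-\<alpha>)\<bar>)
          \<le> (ennreal (g1 (z+h)) + ennreal (g2 z)) + ennreal c3 * ennreal (g3 z)"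
          using c30 by (simp add: ennreal_plus[symmetric] ennreal_mult[symmetric] del: ennreal_plus)
      qed
      also have "\<dots> = ((\<integral>\<^sup>+z. ennreal (g1 (z+h)) \<partial>lborel) + (\<integral>\<^sup>+z. ennreal (g2 z) \<partial>lborel))
          + ennreal c3 * (\<integral>\<^sup>+z. ennreal (g3 z) \<partial>lborel)"
        by (simp add: nn_integral_add nn_integral_cmult)
      also have "(\<integral>\<^sup>+z. ennreal (g1 (z+h)) \<partial>lborel) = (\<integral>\<^sup>+z. ennreal (g1 z) \<partial>lborel)"
        by (rule nn_integral_translate) measurable
      also have "(\<integral>\<^sup>+z. ennreal (g1 z) \<partial>lborel) \<le> ennreal (Bc \<alpha> * (3*\<delta>) powr (2 - \<alpha>))"
        unfolding g1_def using a0 a1 d0 by (intro ball_powr_bound') auto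
      also have "(\<integral>\<^sup>+z. ennreal (g2 z) \<partial>lborel) \<le> ennreal (Bc \<alpha> * (2*\<delta>) powr (2 - \<alpha>))"
        unfolding g2_def using a0 a1 d0 by (intro ball_powr_bound') auto
      also have "(\<integral>\<^sup>+z. ennreal (g3 z) \<partial>lborel) \<le> ennreal (Bc (\<alpha>+1) * R powr (2 - (\<alpha>+1)))"
        unfolding g3_def using a0 a1 R by (intro ball_powr_bound') auto
      also have "ennreal (Bc \<alpha> * (3*\<delta>) powr (2 - \<alpha>)) + ennreal (Bc \<alpha> * (2*\<delta>) powr (2 - \<alpha>))
            + ennreal c3 * ennreal (Bc (\<alpha>+1) * R powr (2 - (\<alpha>+1)))
          = ennreal (Bc \<alpha> * (3*\<delta>) powr (2 - \<alpha>) + Bc \<alpha> * (2*\<delta>) powr (2 - \<alpha>)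
            + c3 * (Bc (\<alpha>+1) * R powr (2 - (\<alpha>+1))))"
        using B0 c30 by (simp add: ennreal_plus ennreal_mult)
      also have "\<dots> \<le> ennreal (C * norm h)"
      proof (rule ennreal_leI)
        have dd: "\<delta> powr (2 - \<alpha>) \<le> \<delta>"
          using powr_mono'[of 1 "2-\<alpha>" \<delta>] d0 h1 a1 by (simp add: \<delta>_def)
        have p3: "(3::real) powr (2 - \<alpha>) \<le> 9"
          using powr_mono[of "2-\<alpha>" 2 3] a0 by simp
        have p2: "(2::real) powr (2 - \<alpha>) \<le> 4"
          using powr_mono[of "2-\<alpha>" 2 2] a0 by simp
        have t1: "(3*\<delta>) powr (2 - \<alpha>) \<le> 9 * \<delta>"
          using d0 dd p3 by (simp add: powr_mult) (metis mult_mono powr_ge_zero order.trans less_imp_le)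
        have t2: "(2*\<delta>) powr (2 - \<alpha>) \<le> 4 * \<delta>"
          using d0 dd p2 by (simp add: powr_mult) (metis mult_mono powr_ge_zero order.trans less_imp_le)
        have pa: "(2::real) powr (\<alpha>+1) \<le> 4"
          using powr_mono[of "\<alpha>+1" 2 2] a1 by simp
        have t3: "c3 \<le> 4 * \<delta>"
        proof -
          have "c3 \<le> 1 * \<delta> * 4" unfolding c3_def
            using a0 a1 d0 pa by (intro mult_mono) auto
          then show ?thesis by simp
        qed
        show "Bc \<alpha> * (3*\<delta>) powr (2 - \<alpha>) + Bc \<alpha> * (2*\<delta>) powr (2 - \<alpha>)
            + c3 * (Bc (\<alpha>+1) * R powr (2 - (\<alpha>+1))) \<le> C * norm h"
        proof -
          have "Bc \<alpha> * (3*\<delta>) powr (2 - \<alpha>) \<le> Bc \<alpha> * (9 * \<delta>)" using t1 B0 by (intro mult_left_mono)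
          moreover have "Bc \<alpha> * (2*\<delta>) powr (2 - \<alpha>) \<le> Bc \<alpha> * (4 * \<delta>)" using t2 B0 by (intro mult_left_mono)
          moreover have "c3 * (Bc (\<alpha>+1) * R powr (2 - (\<alpha>+1))) \<le> (4 * \<delta>) * (Bc (\<alpha>+1) * R powr (2 - (\<alpha>+1)))"
            using t3 B0 by (intro mult_right_mono) auto
          ultimately show ?thesis unfolding C_def \<delta>_def by (simp add: algebra_simps)
        qed
      qed
      finally show ?thesis by (simp add: add_mono mult_left_mono)
    qed
  qed
qed


lemma nn_integral_reflect:
  fixes x :: "'a::euclidean_space"
  assumes [measurable]: "g \<in> borel_measurable borel"
  shows "(\<integral>\<^sup>+y. g (x - y) \<partial>lborel) = integral\<^sup>N lborel g"
proof -
  have "lborel = density (distr lborel borel (\<lambda>y. x + (-1::real) *\<^sub>R y)) (\<lambda>_. \<bar>-1::real\<bar>^DIM('a))"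
    by (rule lborel_affine) simp
  then have L: "lborel = distr lborel borel (\<lambda>y::'a. x - y)"
    by (simp add: density_1)
  have "integral\<^sup>N lborel g = integral\<^sup>N (distr lborel borel (\<lambda>y::'a. x - y)) g"
    by (subst L) simp
  also have "\<dots> = (\<integral>\<^sup>+y. g (x - y) \<partial>lborel)"
    by (subst nn_integral_distr) auto
  finally show ?thesis ..
qed

lemma kernel_set_integrable:
  fixes D :: "complex set" and x :: complex
  assumes D[measurable]: "D \<in> sets lborel" and R: "R > 0" and DR: "\<And>y. y \<in> D \<Longrightarrow> norm (x - y) < R"
    and b: "0 \<le> \<beta>" "\<beta> < 2"
  shows "set_integrable lborel D (\<lambda>y. norm (x - y) powr (-\<beta>))"
  unfolding set_integrable_def
proof (rule integrableI_bounded)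
  show "(\<lambda>y. indicator D y *\<^sub>R norm (x - y) powr (-\<beta>)) \<in> borel_measurable lborel" by measurable
  have "(\<integral>\<^sup>+y. ennreal (norm (indicator D y *\<^sub>R norm (x - y) powr (-\<beta>))) \<partial>lborel)
      \<le> (\<integral>\<^sup>+y. ennreal (indicator (ball 0 R) (x - y) * norm (x - y) powr (-\<beta>)) \<partial>lborel)"
    by (intro nn_integral_mono) (auto simp: indicator_def DR)
  also have "\<dots> = (\<integral>\<^sup>+z. ennreal (indicator (ball 0 R) (z::complex) * norm z powr (-\<beta>)) \<partial>lborel)"
    by (rule nn_integral_reflect[where g = "\<lambda>z::complex. ennreal (indicator (ball 0 R) z * norm z powr (-\<beta>))"]) measurable
  also have "\<dots> \<le> ennreal (Bc \<beta> * R powr (2 - \<beta>))"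
    by (rule ball_powr_bound'[OF b R])
  also have "\<dots> < \<infinity>" by simp
  finally show "(\<integral>\<^sup>+y. ennreal (norm (indicator D y *\<^sub>R norm (x - y) powr (-\<beta>))) \<partial>lborel) < \<infinity>" .
qed

lemma stream_lipschitz:
  fixes \<alpha> M :: real and D :: "complex set"
  assumes a0: "0 < \<alpha>" and a1: "\<alpha> < 1" and D[measurable]: "D \<in> sets lborel"
    and M: "M \<ge> 1" and DM: "D \<subseteq> ball 0 M"
  shows "\<exists>L. \<forall>x h. x \<in> ball 0 M \<longrightarrow> norm h \<le> 1 \<longrightarrow>
           \<bar>stream \<alpha> D (x + h) - stream \<alpha> D x\<bar> \<le> L * norm h"
proof -
  obtain C where C0: "C \<ge> 0" and C: "\<And>h::complex. norm h \<le> 1 \<Longrightarrow>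
     (\<integral>\<^sup>+z. ennreal (indicator (ball 0 (3*M)) z * \<bar>norm (z+h) powr (-\<alpha>) - norm z powr (-\<alpha>)\<bar>) \<partial>lborel)
       \<le> ennreal (C * norm h)"
    using kernel_diff_bound[OF a0 a1, of "3*M"] M by auto
  have M0: "M > 0" using M by simp
  show ?thesis
  proof (intro exI[of _ "\<bar>C_alpha \<alpha> / (2*pi)\<bar> * C"] allI impI)
    fix x h :: complex assume x: "x \<in> ball 0 M" and h: "norm h \<le> 1"
    have ny: "norm (z - y) < 3*M" if "y \<in> D" "norm z < 2*M" for y z
    proof -
      have "norm (z - y) \<le> norm z + norm y" by (rule norm_triangle_ineq4)
      then show ?thesis using that DM by auto
    qed
    have nx: "norm (x + h) < 2 * M" using x h M norm_triangle_ineq[of x h] by simp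
    have nx': "norm x < 2 * M" using x M by simp
    have I1: "set_integrable lborel D (\<lambda>y. norm (x + h - y) powr (-\<alpha>))"
      using a0 a1 M0 by (intro kernel_set_integrable[OF D, where R="3*M"]) (auto intro: ny[OF _ nx])
    have I2: "set_integrable lborel D (\<lambda>y. norm (x - y) powr (-\<alpha>))"
      using a0 a1 M0 by (intro kernel_set_integrable[OF D, where R="3*M"]) (auto intro: ny[OF _ nx'])
    have "stream \<alpha> D (x + h) - stream \<alpha> D x
       = C_alpha \<alpha> / (2*pi) * (LINT y:D|lborel. norm (x + h - y) powr (-\<alpha>) - norm (x - y) powr (-\<alpha>))"
      unfolding stream_def using I1 I2 by (simp add: set_integral_diff right_diff_distrib)
    moreover have "\<bar>LINT y:D|lborel. norm (x + h - y) powr (-\<alpha>) - norm (x - y) powr (-\<alpha>)\<bar> \<le> C * norm h"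
    proof -
      define f where "f y = indicator D y * \<bar>norm (x + h - y) powr (-\<alpha>) - norm (x - y) powr (-\<alpha>)\<bar>" for y
      have If: "integrable lborel f"
      proof -
        have "set_integrable lborel D (\<lambda>y. norm (x + h - y) powr (-\<alpha>) - norm (x - y) powr (-\<alpha>))"
          using I1 I2 by (rule set_integral_diff)
        then have "integrable lborel (\<lambda>y. norm (indicator D y *\<^sub>R (norm (x + h - y) powr (-\<alpha>) - norm (x - y) powr (-\<alpha>))))"
          unfolding set_integrable_def by (rule integrable_norm)
        then show ?thesis unfolding f_def by (simp add: abs_mult)
      qed
      have "\<bar>LINT y:D|lborel. norm (x + h - y) powr (-\<alpha>) - norm (x - y) powr (-\<alpha>)\<bar> \<le> integral\<^sup>L lborel f"
        unfolding set_lebesgue_integral_def f_def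
        using integral_norm_bound[of lborel "\<lambda>y. indicator D y *\<^sub>R (norm (x + h - y) powr (-\<alpha>) - norm (x - y) powr (-\<alpha>))"]
        by (simp add: abs_mult)
      moreover have "ennreal (integral\<^sup>L lborel f) \<le> ennreal (C * norm h)"
      proof -
        have "ennreal (integral\<^sup>L lborel f) = (\<integral>\<^sup>+y. ennreal (f y) \<partial>lborel)"
          by (rule nn_integral_eq_integral[symmetric]) (auto simp: If f_def)
        also have "\<dots> \<le> (\<integral>\<^sup>+y. ennreal (indicator (ball 0 (3*M)) (x - y) * \<bar>norm ((x - y) + h) powr (-\<alpha>) - norm (x - y) powr (-\<alpha>)\<bar>) \<partial>lborel)"
          using ny[OF _ nx'] by (intro nn_integral_mono) (auto simp: f_def indicator_def algebra_simps)
        also have "\<dots> = (\<integral>\<^sup>+z. ennreal (indicator (ball 0 (3*M)) z * \<bar>norm (z + h) powr (-\<alpha>) - norm z powr (-\<alpha>)\<bar>) \<partial>lborel)"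
          by (rule nn_integral_reflect[where g = "\<lambda>z::complex. ennreal (indicator (ball 0 (3*M)) z * \<bar>norm (z + h) powr (-\<alpha>) - norm z powr (-\<alpha>)\<bar>)"]) measurable
        also have "\<dots> \<le> ennreal (C * norm h)" by (rule C[OF h])
        finally show ?thesis .
      qed
      then have "integral\<^sup>L lborel f \<le> C * norm h"
        using C0 by (subst (asm) ennreal_le_iff) auto
      ultimately show ?thesis by linarith
    qed
    ultimately show "\<bar>stream \<alpha> D (x + h) - stream \<alpha> D x\<bar> \<le> \<bar>C_alpha \<alpha> / (2*pi)\<bar> * C * norm h"
      by (simp only: abs_mult mult.assoc) (intro mult_left_mono, auto)
  qed
qed


context
  fixes \<alpha> M :: real and D :: "complex set"
  assumes a0: "0 < \<alpha>" and a1: "\<alpha> < 1" and D[measurable]: "D \<in> sets lborel"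
    and M: "M \<ge> 1" and DM: "D \<subseteq> ball 0 M"
begin

lemma Db[measurable]: "D \<in> sets borel" using D by simp

definition J :: "complex \<Rightarrow> complex \<Rightarrow> real" where
  "J h x = (LINT y:D|lborel. norm (x + h - y) powr (-\<alpha>))"

lemma J_meas[measurable]: "J h \<in> borel_measurable borel"
proof -
  have "(\<lambda>x. LINT y|lborel. indicator D y *\<^sub>R norm (x + h - y) powr (-\<alpha>)) \<in> borel_measurable lborel"
    by measurable
  then show ?thesis unfolding J_def set_lebesgue_integral_def by simp
qed

lemma J_nonneg: "0 \<le> J h x"
  unfolding J_def set_lebesgue_integral_def by (intro Bochner_Integration.integral_nonneg) (simp add: indicator_def)

lemma J_facts:
  assumes x: "x \<in> ball 0 M" and h: "norm h \<le> 1"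
  shows "ennreal (J h x) = (\<integral>\<^sup>+y. ennreal (indicator D y * norm (x + h - y) powr (-\<alpha>)) \<partial>lborel)"
    and "0 \<le> J h x" and "J h x \<le> Bc \<alpha> * (3*M) powr (2 - \<alpha>)"
proof -
  have M0: "M > 0" using M by simp
  have nx: "norm (x + h) < 2 * M" using x h M norm_triangle_ineq[of x h] by simp
  have ny: "norm (x + h - y) < 3*M" if "y \<in> D" for y
  proof -
    have "norm (x + h - y) \<le> norm (x + h) + norm y" by (rule norm_triangle_ineq4)
    then show ?thesis using that DM nx by auto
  qed
  have I: "set_integrable lborel D (\<lambda>y. norm (x + h - y) powr (-\<alpha>))"
    using a0 a1 M0 by (intro kernel_set_integrable[OF D, where R="3*M"]) (auto intro: ny)
  show e: "ennreal (J h x) = (\<integral>\<^sup>+y. ennreal (indicator D y * norm (x + h - y) powr (-\<alpha>)) \<partial>lborel)"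
    unfolding J_def set_lebesgue_integral_def
    using I unfolding set_integrable_def
    by (subst nn_integral_eq_integral) (auto simp: mult.commute)
  show "0 \<le> J h x" by (rule J_nonneg)
  have "(\<integral>\<^sup>+y. ennreal (indicator D y * norm (x + h - y) powr (-\<alpha>)) \<partial>lborel)
      \<le> (\<integral>\<^sup>+y. ennreal (indicator (ball 0 (3*M)) (x + h - y) * norm (x + h - y) powr (-\<alpha>)) \<partial>lborel)"
    by (intro nn_integral_mono) (auto simp: indicator_def ny)
  also have "\<dots> = (\<integral>\<^sup>+z. ennreal (indicator (ball 0 (3*M)) (z::complex) * norm z powr (-\<alpha>)) \<partial>lborel)"
    by (rule nn_integral_reflect[where g = "\<lambda>z::complex. ennreal (indicator (ball 0 (3*M)) z * norm z powr (-\<alpha>))"]) measurable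
  also have "\<dots> \<le> ennreal (Bc \<alpha> * (3*M) powr (2 - \<alpha>))"
    using a0 a1 M0 by (intro ball_powr_bound') auto
  finally have "ennreal (J h x) \<le> ennreal (Bc \<alpha> * (3*M) powr (2 - \<alpha>))" using e by simp
  moreover have "0 \<le> Bc \<alpha> * (3*M) powr (2 - \<alpha>)" using a1 Bc_nonneg[of \<alpha>] by simp
  ultimately show "J h x \<le> Bc \<alpha> * (3*M) powr (2 - \<alpha>)" by (simp add: ennreal_le_iff)
qed

lemma D_finite: "emeasure lborel D < \<infinity>"
proof -
  have "bounded D" using DM bounded_ball bounded_subset by blast
  then show ?thesis by (rule emeasure_bounded_finite)
qed

lemma J_integrable:
  assumes h: "norm h \<le> 1"
  shows "set_integrable lborel D (J h)"
  unfolding set_integrable_def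
proof (rule integrableI_bounded_set_indicator[where B = "Bc \<alpha> * (3*M) powr (2 - \<alpha>)"])
  show "D \<in> sets lborel" by simp
  show "J h \<in> borel_measurable lborel" using J_meas by simp
  show "emeasure lborel D < \<infinity>" by (rule D_finite)
  show "AE x in lborel. x \<in> D \<longrightarrow> norm (J h x) \<le> Bc \<alpha> * (3*M) powr (2 - \<alpha>)"
  proof (rule AE_I2, rule impI)
    fix x assume "x \<in> D"
    then have "x \<in> ball 0 M" using DM by auto
    then show "norm (J h x) \<le> Bc \<alpha> * (3*M) powr (2 - \<alpha>)"
      using J_facts(2,3)[OF _ h] by simp
  qed
qed

lemma J_double:
  assumes h: "norm h \<le> 1"
  shows "ennreal (LINT x:D|lborel. J h x) =
     (\<integral>\<^sup>+x. \<integral>\<^sup>+y. ennreal (indicator D x * indicator D y * norm (x + h - y) powr (-\<alpha>)) \<partial>lborel \<partial>lborel)"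
proof -
  have "ennreal (LINT x:D|lborel. J h x) = (\<integral>\<^sup>+x. ennreal (indicator D x * J h x) \<partial>lborel)"
    unfolding set_lebesgue_integral_def
    using J_integrable[OF h] unfolding set_integrable_def
    by (subst nn_integral_eq_integral) (auto simp: indicator_def J_nonneg mult.commute
        intro!: nn_integral_cong)
  also have "\<dots> = (\<integral>\<^sup>+x. \<integral>\<^sup>+y. ennreal (indicator D x * indicator D y * norm (x + h - y) powr (-\<alpha>)) \<partial>lborel \<partial>lborel)"
  proof (rule nn_integral_cong)
    fix x :: complex
    show "ennreal (indicator D x * J h x) = (\<integral>\<^sup>+y. ennreal (indicator D x * indicator D y * norm (x + h - y) powr (-\<alpha>)) \<partial>lborel)"
    proof (cases "x \<in> D")
      case True
      then have "x \<in> ball 0 M" using DM by auto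
      then show ?thesis using True J_facts(1)[OF _ h] by simp
    qed simp
  qed
  finally show ?thesis .
qed

lemma J_symm:
  assumes h: "norm h \<le> 1"
  shows "(LINT x:D|lborel. J h x) = (LINT x:D|lborel. J (-h) x)"
proof -
  have h': "norm (-h) \<le> 1" using h by simp
  have "ennreal (LINT x:D|lborel. J h x) =
     (\<integral>\<^sup>+x. \<integral>\<^sup>+y. ennreal (indicator D x * indicator D y * norm (x + h - y) powr (-\<alpha>)) \<partial>lborel \<partial>lborel)"
    by (rule J_double[OF h])
  also have "\<dots> = (\<integral>\<^sup>+y. \<integral>\<^sup>+x. ennreal (indicator D x * indicator D y * norm (x + h - y) powr (-\<alpha>)) \<partial>lborel \<partial>lborel)"
    by (rule lborel_pair.Fubini'[symmetric]) measurable
  also have "\<dots> = (\<integral>\<^sup>+x. \<integral>\<^sup>+y. ennreal (indicator D x * indicator D y * norm (x + (-h) - y) powr (-\<alpha>)) \<partial>lborel \<partial>lborel)"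
  proof -
    have "norm (y + h - x) = norm (x + (-h) - y)" for x y :: complex
      using norm_minus_cancel[of "y + h - x"] by (simp add: algebra_simps)
    then show ?thesis by (simp add: mult_ac)
  qed
  also have "\<dots> = ennreal (LINT x:D|lborel. J (-h) x)"
    by (rule J_double[OF h', symmetric])
  finally have "ennreal (LINT x:D|lborel. J h x) = ennreal (LINT x:D|lborel. J (-h) x)" .
  moreover have "0 \<le> (LINT x:D|lborel. J h x)" "0 \<le> (LINT x:D|lborel. J (-h) x)"
    unfolding set_lebesgue_integral_def by (auto intro!: Bochner_Integration.integral_nonneg simp: J_nonneg)
  ultimately show ?thesis by simp
qed

end


lemma dir_quot:
  fixes f :: "complex \<Rightarrow> real"
  assumes d: "(f has_derivative f') (at x)"
  shows "((\<lambda>t::real. (f (x + t *\<^sub>R v) - f x) / t) \<longlongrightarrow> f' v) (at 0)"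
proof -
  have l: "linear f'" using d by (rule has_derivative_linear)
  have d1: "((\<lambda>t::real. x + t *\<^sub>R v) has_derivative (\<lambda>t. t *\<^sub>R v)) (at 0)"
    by (auto intro!: derivative_eq_intros)
  have d2: "(f has_derivative f') (at (x + 0 *\<^sub>R v))" using d by simp
  have "((\<lambda>t. f (x + t *\<^sub>R v)) has_derivative (\<lambda>t. f' (t *\<^sub>R v))) (at 0)"
    using has_derivative_compose[OF d1 d2] by (simp add: o_def)
  moreover have "(\<lambda>t. f' (t *\<^sub>R v)) = (*) (f' v)"
    using linear_scale[OF l] by (auto simp: mult.commute)
  ultimately have "((\<lambda>t. f (x + t *\<^sub>R v)) has_field_derivative f' v) (at 0)"
    unfolding has_field_derivative_def by (simp only:)
  from DERIV_D[OF this] show ?thesis by simp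
qed

lemma sym_quot:
  fixes f :: "complex \<Rightarrow> real"
  assumes d: "(f has_derivative f') (at x)" and e: "e \<longlonglongrightarrow> 0" and e0: "\<And>n. e n \<noteq> 0"
  shows "(\<lambda>n. (f (x + e n *\<^sub>R v) - f (x + (- (e n *\<^sub>R v)))) / (2 * e n)) \<longlonglongrightarrow> f' v"
proof -
  have ea: "filterlim e (at 0) sequentially" using e e0 by (auto intro: tendsto_imp_filterlim_at_right filterlim_atI)
  have ea': "filterlim (\<lambda>n. - e n) (at 0) sequentially"
    using e e0 by (intro filterlim_atI) (auto intro: tendsto_minus_cancel_left[THEN iffD1] simp: tendsto_minus_cancel_left)
  have t1: "(\<lambda>n. (f (x + e n *\<^sub>R v) - f x) / e n) \<longlonglongrightarrow> f' v"
    using filterlim_compose[OF dir_quot[OF d, of v] ea] by simp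
  have t2: "(\<lambda>n. (f (x + (- e n) *\<^sub>R v) - f x) / (- e n)) \<longlonglongrightarrow> f' v"
    using filterlim_compose[OF dir_quot[OF d, of v] ea'] by simp
  have "(\<lambda>n. ((f (x + e n *\<^sub>R v) - f x) / e n + (f (x + (- e n) *\<^sub>R v) - f x) / (- e n)) / 2) \<longlonglongrightarrow> f' v"
    using tendsto_divide[OF tendsto_add[OF t1 t2] tendsto_const[of 2]] by simp
  moreover have "(\<lambda>n. ((f (x + e n *\<^sub>R v) - f x) / e n + (f (x + (- e n) *\<^sub>R v) - f x) / (- e n)) / 2)
      = (\<lambda>n. (f (x + e n *\<^sub>R v) - f (x + (- (e n *\<^sub>R v)))) / (2 * e n))"
  proof
    fix n
    have en: "e n \<noteq> 0" by (rule e0)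
    show "((f (x + e n *\<^sub>R v) - f x) / e n + (f (x + (- e n) *\<^sub>R v) - f x) / (- e n)) / 2
      = (f (x + e n *\<^sub>R v) - f (x + (- (e n *\<^sub>R v)))) / (2 * e n)"
      using en by (simp add: divide_simps)
  qed
  ultimately show ?thesis by (simp only:)
qed


lemma grad_int_zero:
  fixes \<alpha> :: real and D :: "complex set" and v :: complex
  assumes a0: "0 < \<alpha>" and a1: "\<alpha> < 1" and D[measurable]: "D \<in> sets lborel" and bD: "bounded D"
    and diff: "\<And>x. stream \<alpha> D differentiable (at x)"
  shows "(LINT x:D|lborel. frechet_derivative (stream \<alpha> D) (at x) v) = 0"
proof -
  have Db[measurable]: "D \<in> sets borel" using D by simp
  obtain r where r: "0 < r" "D \<subseteq> ball 0 r" using bounded_subset_ballD[OF bD] by blast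
  define M where "M = max 1 r"
  have M: "M \<ge> 1" by (simp add: M_def)
  have DM: "D \<subseteq> ball 0 M" using r by (auto simp: M_def)
  define s where "s = stream \<alpha> D"
  define s' where "s' x = frechet_derivative s (at x)" for x
  have der: "(s has_derivative s' x) (at x)" for x
    unfolding s'_def s_def using diff frechet_derivative_works by blast
  have cont: "continuous_on UNIV s"
    using der by (intro continuous_at_imp_continuous_on ballI has_derivative_continuous) auto
  have smeas[measurable]: "s \<in> borel_measurable borel" by (rule borel_measurable_continuous_onI[OF cont])
  obtain L where L: "\<And>x h. x \<in> ball 0 M \<Longrightarrow> norm h \<le> 1 \<Longrightarrow> \<bar>s (x + h) - s x\<bar> \<le> L * norm h"
    using stream_lipschitz[OF a0 a1 D M DM] unfolding s_def by blast
  define e where "e n = 1 / ((real n + 1) * (norm v + 1))" for n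
  have e0: "e n > 0" for n unfolding e_def using norm_ge_zero[of v] by (intro divide_pos_pos mult_pos_pos) linarith+
  have e1: "norm (e n *\<^sub>R v) \<le> 1" for n
  proof -
    have "norm (e n *\<^sub>R v) = norm v / ((real n + 1) * (norm v + 1))" using e0[of n] by (simp add: e_def)
    also have "\<dots> \<le> 1" by (simp add: divide_le_eq_1 add_pos_nonneg) (smt (verit) mult_le_cancel_right1 norm_ge_zero of_nat_0_le_iff)
    finally show ?thesis .
  qed
  have elim: "e \<longlonglongrightarrow> 0"
  proof -
    have "(\<lambda>n. 1 / (real n + 1) * (1 / (norm v + 1))) \<longlonglongrightarrow> 0 * (1 / (norm v + 1))"
    proof (intro tendsto_mult tendsto_const)
      show "(\<lambda>n. 1 / (real n + 1)) \<longlonglongrightarrow> 0"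
        using LIMSEQ_inverse_real_of_nat by (simp add: inverse_eq_divide add.commute)
    qed
    then show ?thesis unfolding e_def by simp
  qed
  define q where "q n x = (s (x + e n *\<^sub>R v) - s (x + (- (e n *\<^sub>R v)))) / (2 * e n)" for n x
  have qmeas[measurable]: "q n \<in> borel_measurable borel" for n unfolding q_def by measurable
  define c where "c = C_alpha \<alpha> / (2 * pi)"
  have sJ: "s (x + h) = c * J \<alpha> D h x" for x h unfolding s_def stream_def J_def[OF a0 a1 D M DM] c_def by simp
  have qint: "(LINT x:D|lborel. q n x) = 0" for n
  proof -
    have h1: "norm (e n *\<^sub>R v) \<le> 1" by (rule e1)
    have h2: "norm (- (e n *\<^sub>R v)) \<le> 1" using e1[of n] by simp
    have I1: "set_integrable lborel D (J \<alpha> D (e n *\<^sub>R v))" by (rule J_integrable[OF a0 a1 D M DM h1])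
    have I2: "set_integrable lborel D (J \<alpha> D (- (e n *\<^sub>R v)))" by (rule J_integrable[OF a0 a1 D M DM h2])
    have "(LINT x:D|lborel. q n x) = (LINT x:D|lborel. (c / (2 * e n)) * (J \<alpha> D (e n *\<^sub>R v) x - J \<alpha> D (- (e n *\<^sub>R v)) x))"
    proof (rule set_lebesgue_integral_cong, simp, intro allI impI)
      fix x assume "x \<in> D"
      have "\<And>a b c d :: real. (c*a - c*b)/d = c/d*(a-b)" by (simp add: right_diff_distrib diff_divide_distrib)
      then show "q n x = (c / (2 * e n)) * (J \<alpha> D (e n *\<^sub>R v) x - J \<alpha> D (- (e n *\<^sub>R v)) x)"
        unfolding q_def sJ by blast
    qed
    also have "\<dots> = (c / (2 * e n)) * ((LINT x:D|lborel. J \<alpha> D (e n *\<^sub>R v) x) - (LINT x:D|lborel. J \<alpha> D (- (e n *\<^sub>R v)) x))"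
      using set_integral_diff(2)[OF I1 I2] by (subst set_integral_mult_right) simp
    also have "\<dots> = 0" using J_symm[OF a0 a1 D M DM h1] by simp
    finally show ?thesis .
  qed
  have conv: "(\<lambda>n. LINT x|lborel. indicator D x *\<^sub>R q n x) \<longlonglongrightarrow> (LINT x|lborel. indicator D x *\<^sub>R s' x v)"
  proof (rule integral_dominated_convergence[where w = "\<lambda>x. indicator D x * (L * norm v)"])
    have pt: "(\<lambda>n. q n x) \<longlonglongrightarrow> s' x v" for x
    proof -
      have en0: "e n \<noteq> 0" for n using e0[of n] by simp
      show ?thesis unfolding q_def by (rule sym_quot[OF der elim en0])
    qed
    show "(\<lambda>x. indicator D x *\<^sub>R s' x v) \<in> borel_measurable lborel"
    proof -
      have "(\<lambda>x. s' x v) \<in> borel_measurable borel"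
        by (rule borel_measurable_LIMSEQ_real[OF pt]) simp
      then show ?thesis by measurable
    qed
    show "(\<lambda>x. indicator D x *\<^sub>R q n x) \<in> borel_measurable lborel" for n by measurable
    show "integrable lborel (\<lambda>x. indicator D x * (L * norm v))"
      using D_finite[OF a0 a1 D M DM] by (intro integrable_mult_left integrable_real_indicator) auto
    show "AE x in lborel. (\<lambda>n. indicator D x *\<^sub>R q n x) \<longlonglongrightarrow> indicator D x *\<^sub>R s' x v"
      by (intro AE_I2 tendsto_scaleR tendsto_const pt)
    show "AE x in lborel. norm (indicator D x *\<^sub>R q n x) \<le> indicator D x * (L * norm v)" for n
    proof (rule AE_I2)
      fix x
      show "norm (indicator D x *\<^sub>R q n x) \<le> indicator D x * (L * norm v)"
      proof (cases "x \<in> D")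
        case True
        then have x: "x \<in> ball 0 M" using DM by auto
        have a: "\<bar>s (x + e n *\<^sub>R v) - s x\<bar> \<le> L * norm (e n *\<^sub>R v)" by (rule L[OF x e1])
        have b: "\<bar>s (x + (- (e n *\<^sub>R v))) - s x\<bar> \<le> L * norm (e n *\<^sub>R v)"
          using L[OF x, of "- (e n *\<^sub>R v)"] e1[of n] by simp
        have "\<bar>s (x + e n *\<^sub>R v) - s (x + (- (e n *\<^sub>R v)))\<bar> \<le> 2 * (L * norm (e n *\<^sub>R v))"
          using a b by linarith
        also have "\<dots> = 2 * e n * (L * norm v)" using e0[of n] by simp
        finally have num: "\<bar>s (x + e n *\<^sub>R v) - s (x + (- (e n *\<^sub>R v)))\<bar> \<le> 2 * e n * (L * norm v)" .
        have "\<bar>q n x\<bar> = \<bar>s (x + e n *\<^sub>R v) - s (x + (- (e n *\<^sub>R v)))\<bar> / (2 * e n)"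
          unfolding q_def using e0[of n] by (simp add: abs_divide)
        also have "\<dots> \<le> (2 * e n * (L * norm v)) / (2 * e n)"
          using num e0[of n] by (intro divide_right_mono) auto
        also have "\<dots> = L * norm v" using e0[of n] by simp
        finally have "\<bar>q n x\<bar> \<le> L * norm v" .
        then show ?thesis using True by simp
      qed simp
    qed
  qed
  have "(\<lambda>n. LINT x|lborel. indicator D x *\<^sub>R q n x) = (\<lambda>n. 0)"
    using qint unfolding set_lebesgue_integral_def by simp
  then have "(\<lambda>n. 0::real) \<longlonglongrightarrow> (LINT x|lborel. indicator D x *\<^sub>R s' x v)" using conv by simp
  then have "(LINT x|lborel. indicator D x *\<^sub>R s' x v) = 0"
    using LIMSEQ_unique tendsto_const by blast
  then show ?thesis unfolding set_lebesgue_integral_def s'_def s_def .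
qed


definition f0 :: "real \<Rightarrow> real" where "f0 t = (max 0 t)^2"
definition f0' :: "real \<Rightarrow> real" where "f0' t = 2 * max 0 t"

lemma f0_deriv: "(f0 has_real_derivative f0' t) (at t)"
proof -
  consider "t > 0" | "t < 0" | "t = 0" by linarith
  then show ?thesis
  proof cases
    case 1
    have "((\<lambda>t. t^2) has_real_derivative f0' t) (at t)"
      using 1 by (auto intro!: derivative_eq_intros simp: f0'_def)
    then show ?thesis
      by (rule has_field_derivative_transform_within_open[where S="{0<..}"]) (use 1 in \<open>auto simp: f0_def f0'_def\<close>)
  next
    case 2
    have "((\<lambda>t. 0) has_real_derivative f0' t) (at t)" using 2 by (simp add: f0'_def)
    then show ?thesis
      by (rule has_field_derivative_transform_within_open[where S="{..<0}"]) (use 2 in \<open>auto simp: f0_def f0'_def\<close>)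
  next
    case 3
    have "((\<lambda>h. (f0 (0 + h) - f0 0) / h) \<longlongrightarrow> 0) (at 0)"
    proof (rule Lim_null_comparison[where g = "\<lambda>h. \<bar>h\<bar>"])
      show "\<forall>\<^sub>F h in at 0. norm ((f0 (0 + h) - f0 0) / h) \<le> \<bar>h\<bar>"
      proof (rule always_eventually, rule allI)
        fix h :: real
        show "norm ((f0 (0 + h) - f0 0) / h) \<le> \<bar>h\<bar>"
          by (cases "h > 0") (auto simp: f0_def power2_eq_square abs_mult max_def)
      qed
      show "((\<lambda>h. \<bar>h\<bar>) \<longlongrightarrow> 0) (at (0::real))"
        using tendsto_rabs[OF tendsto_ident_at[of "0::real" UNIV]] by simp
    qed
    then show ?thesis using 3 by (simp add: DERIV_def f0'_def)
  qed
qed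

lemma f0_cont: "continuous_on UNIV f0" "continuous_on UNIV f0'"
  unfolding f0_def f0'_def by (intro continuous_intros)+

lemma f0_nonneg: "f0 t \<ge> 0" by (simp add: f0_def)
lemma f0_pos: "t > 0 \<Longrightarrow> f0 t > 0" by (simp add: f0_def)
lemma f0_zero: "t \<le> 0 \<Longrightarrow> f0 t = 0" "t \<le> 0 \<Longrightarrow> f0' t = 0" by (simp_all add: f0_def f0'_def)

definition chi :: "real \<Rightarrow> real \<Rightarrow> real" where
  "chi a r = f0 (a + 1 - r) / (f0 (a + 1 - r) + f0 (r - a))"
definition chi' :: "real \<Rightarrow> real \<Rightarrow> real" where
  "chi' a r = ((- f0' (a + 1 - r)) * f0 (r - a) - f0 (a + 1 - r) * f0' (r - a)) / (f0 (a + 1 - r) + f0 (r - a))^2"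

lemma den_pos: "f0 (a + 1 - r) + f0 (r - a) > 0"
proof (cases "r \<le> a")
  case True then have "f0 (a + 1 - r) > 0" by (intro f0_pos) simp
  then show ?thesis using f0_nonneg[of "r - a"] by simp
next
  case False then have "f0 (r - a) > 0" by (intro f0_pos) simp
  then show ?thesis using f0_nonneg[of "a + 1 - r"] by simp
qed

lemma chi_deriv: "(chi a has_real_derivative chi' a r) (at r)"
proof -
  have d1: "((\<lambda>r. f0 (a + 1 - r)) has_real_derivative f0' (a + 1 - r) * (-1)) (at r)"
    using DERIV_chain2[OF f0_deriv, of "\<lambda>r. a + 1 - r" "-1" r]
    by (simp add: DERIV_diff[OF DERIV_const DERIV_ident, of "a+1", simplified])
  have d2: "((\<lambda>r. f0 (r - a)) has_real_derivative f0' (r - a) * 1) (at r)"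
    using DERIV_chain2[OF f0_deriv, of "\<lambda>r. r - a" 1 r]
    by (simp add: DERIV_diff[OF DERIV_ident DERIV_const, simplified])
  have "((\<lambda>r. f0 (a + 1 - r) / (f0 (a + 1 - r) + f0 (r - a))) has_real_derivative
     ((f0' (a + 1 - r) * (-1)) * (f0 (a + 1 - r) + f0 (r - a)) - f0 (a + 1 - r) * (f0' (a + 1 - r) * (-1) + f0' (r - a) * 1))
       / ((f0 (a + 1 - r) + f0 (r - a)) * (f0 (a + 1 - r) + f0 (r - a)))) (at r)"
    using den_pos[of a r] by (intro DERIV_divide d1 d2 DERIV_add) auto
  moreover have "((f0' (a + 1 - r) * (-1)) * (f0 (a + 1 - r) + f0 (r - a)) - f0 (a + 1 - r) * (f0' (a + 1 - r) * (-1) + f0' (r - a) * 1))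
       / ((f0 (a + 1 - r) + f0 (r - a)) * (f0 (a + 1 - r) + f0 (r - a))) = chi' a r"
    unfolding chi'_def by (simp add: power2_eq_square algebra_simps)
  ultimately show ?thesis unfolding chi_def[abs_def] by simp
qed

lemma chi_cont: "continuous_on UNIV (chi a)" "continuous_on UNIV (chi' a)"
proof -
  have c1: "continuous_on UNIV (\<lambda>r. f0 (a + 1 - r))" "continuous_on UNIV (\<lambda>r. f0 (r - a))"
    "continuous_on UNIV (\<lambda>r. f0' (a + 1 - r))" "continuous_on UNIV (\<lambda>r. f0' (r - a))"
    by (auto intro!: continuous_on_compose2[OF f0_cont(1)] continuous_on_compose2[OF f0_cont(2)] continuous_intros)
  show "continuous_on UNIV (chi a)" unfolding chi_def[abs_def]
    using den_pos[of a] by (intro continuous_intros c1) (auto simp: less_imp_neq[symmetric] dest: sym)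
  show "continuous_on UNIV (chi' a)" unfolding chi'_def[abs_def]
    using den_pos[of a] by (intro continuous_intros c1) (auto simp: less_imp_neq[symmetric] dest: sym)
qed

lemma chi_one: "r < a \<Longrightarrow> chi a r = 1" "r < a \<Longrightarrow> chi' a r = 0"
proof -
  assume r: "r < a"
  have z: "f0 (r - a) = 0" "f0' (r - a) = 0" using r by (simp_all add: f0_zero)
  have p: "f0 (a + 1 - r) > 0" using r by (intro f0_pos) simp
  show "chi a r = 1" unfolding chi_def using z p by simp
  show "chi' a r = 0" unfolding chi'_def using z by simp
qed

lemma chi_zero: "r \<ge> a + 1 \<Longrightarrow> chi a r = 0"
  unfolding chi_def by (simp add: f0_zero)


definition psi :: "real \<Rightarrow> complex \<Rightarrow> complex \<Rightarrow> real" where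
  "psi a w x = (w \<bullet> x) * chi a (x \<bullet> x)"

definition Dpsi :: "real \<Rightarrow> complex \<Rightarrow> complex \<Rightarrow> complex \<Rightarrow> real" where
  "Dpsi a w x v = (w \<bullet> x) * (chi' a (x \<bullet> x) * (x \<bullet> v + v \<bullet> x)) + (w \<bullet> v) * chi a (x \<bullet> x)"

lemma psi_deriv: "(psi a w has_derivative Dpsi a w x) (at x)"
proof -
  have c1: "((\<lambda>x. x \<bullet> x) has_derivative (\<lambda>v. x \<bullet> v + v \<bullet> x)) (at x)"
    by (rule has_derivative_inner[OF has_derivative_ident has_derivative_ident])
  have c2: "(chi a has_derivative (\<lambda>h. chi' a (x \<bullet> x) * h)) (at (x \<bullet> x))"
    using chi_deriv[of a "x \<bullet> x"] unfolding has_field_derivative_def by simp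
  have c3: "((\<lambda>x. chi a (x \<bullet> x)) has_derivative (\<lambda>v. chi' a (x \<bullet> x) * (x \<bullet> v + v \<bullet> x))) (at x)"
    using has_derivative_compose[OF c1 c2] by simp
  have c4: "((\<lambda>x. w \<bullet> x) has_derivative (\<lambda>v. w \<bullet> v)) (at x)"
    by (rule has_derivative_inner_right[OF has_derivative_ident])
  show ?thesis unfolding psi_def[abs_def] Dpsi_def[abs_def]
    using has_derivative_mult[OF c4 c3] by simp
qed

lemma frechet_psi: "frechet_derivative (psi a w) (at x) = Dpsi a w x"
  using psi_deriv frechet_derivative_at by metis

lemma test_fun_psi: "test_fun (psi a w)"
  unfolding test_fun_def
proof (intro conjI allI)
  show "psi a w differentiable_on UNIV"
    using psi_deriv unfolding differentiable_on_def differentiable_def by blast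
  fix v :: complex
  have cc: "continuous_on UNIV (\<lambda>x::complex. chi a (x \<bullet> x))" "continuous_on UNIV (\<lambda>x::complex. chi' a (x \<bullet> x))"
    by (auto intro!: continuous_on_compose2[OF chi_cont(1)] continuous_on_compose2[OF chi_cont(2)] continuous_intros)
  show "continuous_on UNIV (\<lambda>x. frechet_derivative (psi a w) (at x) v)"
    unfolding frechet_psi Dpsi_def by (intro continuous_intros cc)
  have "{x. psi a w x \<noteq> 0} \<subseteq> cball 0 (sqrt (a + 1))"
  proof
    fix x assume "x \<in> {x. psi a w x \<noteq> 0}"
    then have "chi a (x \<bullet> x) \<noteq> 0" by (simp add: psi_def)
    then have "x \<bullet> x < a + 1" using chi_zero[of a "x \<bullet> x"] by linarith
    then have "norm x ^ 2 \<le> a + 1" by (simp add: power2_norm_eq_inner)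
    then show "x \<in> cball 0 (sqrt (a + 1))" by (simp add: real_le_rsqrt)
  qed
  then show "bounded {x. psi a w x \<noteq> 0}" by (rule bounded_subset[OF bounded_cball])
qed

lemma psi_inside:
  assumes "norm x ^ 2 < a"
  shows "psi a w x = w \<bullet> x" and "grad (psi a w) x = w"
proof -
  have xx: "x \<bullet> x < a" using assms by (simp add: power2_norm_eq_inner)
  show "psi a w x = w \<bullet> x" using chi_one(1)[OF xx] by (simp add: psi_def)
  have "Dpsi a w x = (\<lambda>v. w \<bullet> v)" using chi_one[OF xx] by (simp add: Dpsi_def[abs_def])
  then show "grad (psi a w) x = w"
    unfolding grad_def frechet_psi by (simp add: inner_complex_def complex_eq_iff)
qed


lemma box_pair_eq: "box (la, lb) (ua, ub) = box la ua \<times> box (lb::real) ub" for la ua :: real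
  by (auto simp: box_def Basis_prod_def)

lemma lborel_complex_pair: "distr lborel borel (\<lambda>z::complex. (Re z, Im z)) = (lborel :: (real \<times> real) measure)"
proof (rule lborel_eqI[symmetric])
  show "sets (distr lborel borel (\<lambda>z::complex. (Re z, Im z))) = sets (borel :: (real \<times> real) measure)" by simp
  fix l u :: "real \<times> real"
  assume lu: "\<And>b. b \<in> Basis \<Longrightarrow> l \<bullet> b \<le> u \<bullet> b"
  obtain la lb ua ub where l: "l = (la, lb)" and u: "u = (ua, ub)" by (cases l, cases u) auto
  have le: "la \<le> ua" "lb \<le> ub" using lu[of "(1,0)"] lu[of "(0,1)"] by (auto simp: l u Basis_prod_def)
  have pre: "(\<lambda>z::complex. (Re z, Im z)) -` box l u = box (Complex la lb) (Complex ua ub)"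
    by (auto simp: l u box_pair_eq mem_box Basis_complex_def)
  have "emeasure (distr lborel borel (\<lambda>z::complex. (Re z, Im z))) (box l u) = emeasure lborel (box (Complex la lb) (Complex ua ub))"
    by (subst emeasure_distr) (auto simp: pre)
  also have "\<dots> = ennreal ((ua - la) * (ub - lb))"
    using le by (subst emeasure_lborel_box_eq) (auto simp: Basis_complex_def mult.commute)
  also have "(ua - la) * (ub - lb) = (\<Prod>b\<in>Basis. (u - l) \<bullet> b)"
    by (simp add: l u Basis_prod_def prod.union_disjoint prod.reindex inj_on_def)
  finally show "emeasure (distr lborel borel (\<lambda>z::complex. (Re z, Im z))) (box l u) = ennreal (\<Prod>b\<in>Basis. (u - l) \<bullet> b)" .
qed

lemma Complex_meas[measurable]: "(\<lambda>(x,y). Complex x y) \<in> borel_measurable (borel :: (real \<times> real) measure)"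
proof -
  have "(\<lambda>(x,y). Complex x y) = (\<lambda>p::real\<times>real. complex_of_real (fst p) + \<i> * complex_of_real (snd p))"
    by (auto simp: complex_eq_iff)
  moreover have "(\<lambda>p::real\<times>real. complex_of_real (fst p) + \<i> * complex_of_real (snd p)) \<in> borel_measurable borel"
    by (intro borel_measurable_continuous_onI continuous_intros)
  ultimately show ?thesis by simp
qed

lemma lborel_pair_complex: "distr lborel borel (\<lambda>(x,y). Complex x y) = (lborel :: complex measure)"
proof -
  have "distr lborel borel (\<lambda>(x,y). Complex x y) = distr (distr lborel borel (\<lambda>z::complex. (Re z, Im z))) borel (\<lambda>(x,y). Complex x y)"
    by (simp add: lborel_complex_pair)
  also have "\<dots> = distr lborel borel ((\<lambda>(x,y). Complex x y) \<circ> (\<lambda>z::complex. (Re z, Im z)))"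
    by (subst distr_distr) (auto simp: case_prod_beta)
  also have "(\<lambda>(x,y). Complex x y) \<circ> (\<lambda>z::complex. (Re z, Im z)) = (\<lambda>z. z)" by (auto simp: o_def)
  finally show ?thesis by (simp add: distr_id2)
qed


lemma mp_comp:
  assumes f[measurable]: "f \<in> borel_measurable borel" and g[measurable]: "g \<in> borel_measurable borel"
    and df: "distr lborel borel f = lborel" and dg: "distr lborel borel g = lborel"
  shows "distr lborel borel (g \<circ> f) = lborel"
proof -
  have "distr lborel borel (g \<circ> f) = distr (distr lborel borel f) borel g"
    by (subst distr_distr) auto
  also have "\<dots> = lborel" using df dg by simp
  finally show ?thesis .
qed

lemma lborel_vshear: "distr lborel borel (\<lambda>(x,y). (x, y + b*x)) = (lborel :: (real \<times> real) measure)"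
proof (rule lborel_eqI[symmetric])
  show "sets (distr lborel borel (\<lambda>(x,y). (x, y + b*x))) = sets (borel :: (real \<times> real) measure)" by simp
  fix l u :: "real \<times> real"
  assume lu: "\<And>c. c \<in> Basis \<Longrightarrow> l \<bullet> c \<le> u \<bullet> c"
  obtain la lb ua ub where l: "l = (la, lb)" and u: "u = (ua, ub)" by (cases l, cases u) auto
  have le: "la \<le> ua" "lb \<le> ub" using lu[of "(1,0)"] lu[of "(0,1)"] by (auto simp: l u Basis_prod_def)
  have meas[measurable]: "(\<lambda>(x::real,y::real). (x, y + b*x)) \<in> borel_measurable borel"
    by (intro borel_measurable_continuous_onI) (simp add: case_prod_beta continuous_intros)
  define A where "A = (\<lambda>(x::real,y::real). (x, y + b*x)) -` box l u"
  have Asets: "A \<in> sets (lborel \<Otimes>\<^sub>M lborel)"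
    unfolding A_def lborel_prod using measurable_sets[OF meas, of "box l u"] by simp
  have slice: "emeasure lborel (Pair x -` A) = ennreal (indicator {la<..<ua} x * (ub - lb))" for x
  proof (cases "la < x \<and> x < ua")
    case True
    then have "Pair x -` A = {lb - b*x <..< ub - b*x}"
      by (auto simp: A_def l u box_pair_eq)
    then show ?thesis using True le by simp
  next
    case False
    then have "Pair x -` A = {}" by (auto simp: A_def l u box_pair_eq)
    then show ?thesis using False by simp
  qed
  have "emeasure (distr lborel borel (\<lambda>(x,y). (x, y + b*x))) (box l u) = emeasure lborel A"
    unfolding A_def by (subst emeasure_distr) auto
  also have "\<dots> = emeasure (lborel \<Otimes>\<^sub>M lborel) A" by (simp add: lborel_prod)
  also have "\<dots> = (\<integral>\<^sup>+x. emeasure lborel (Pair x -` A) \<partial>lborel)"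
    by (rule lborel.emeasure_pair_measure_alt[OF Asets])
  also have "\<dots> = (\<integral>\<^sup>+x. ennreal (ub - lb) * indicator {la<..<ua} x \<partial>lborel)"
    using le by (intro nn_integral_cong) (simp add: slice ennreal_mult' mult.commute split: split_indicator)
  also have "\<dots> = ennreal (ub - lb) * ennreal (ua - la)"
    using le by (subst nn_integral_cmult_indicator) auto
  also have "\<dots> = ennreal (\<Prod>c\<in>Basis. (u - l) \<bullet> c)"
    using le by (simp add: l u Basis_prod_def prod.union_disjoint prod.reindex inj_on_def ennreal_mult' mult.commute)
  finally show "emeasure (distr lborel borel (\<lambda>(x,y). (x, y + b*x))) (box l u) = ennreal (\<Prod>c\<in>Basis. (u - l) \<bullet> c)" .
qed

lemma lborel_swap: "distr lborel borel (\<lambda>(x,y). (y,x)) = (lborel :: (real \<times> real) measure)"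
proof -
  have "(lborel :: (real \<times> real) measure) = distr (lborel \<Otimes>\<^sub>M lborel) (lborel \<Otimes>\<^sub>M lborel) (\<lambda>(x,y). (y,x))"
    by (subst lborel_pair.distr_pair_swap[symmetric]) (simp add: lborel_prod)
  also have "\<dots> = distr lborel borel (\<lambda>(x,y). (y,x))"
    by (simp add: lborel_prod) (rule distr_cong, auto)
  finally show ?thesis ..
qed


lemma hshear_meas[measurable]: "(\<lambda>(x::real,y::real). (x, y + b*x)) \<in> borel_measurable borel"
  by (intro borel_measurable_continuous_onI) (simp add: case_prod_beta continuous_intros)

lemma swap_meas[measurable]: "(\<lambda>(x::real,y::real). (y,x)) \<in> borel_measurable borel"
  by (intro borel_measurable_continuous_onI) (simp add: case_prod_beta continuous_intros)

lemma P_meas[measurable]: "(\<lambda>z::complex. (Re z, Im z)) \<in> borel_measurable borel"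
  by (intro borel_measurable_continuous_onI) (simp add: continuous_intros)

lemma lborel_hshear: "distr lborel borel (\<lambda>(x,y). (x + t*y, y)) = (lborel :: (real \<times> real) measure)"
proof -
  have e: "(\<lambda>(x,y). (x + t*y, y)) = (\<lambda>(x::real,y::real). (y,x)) \<circ> ((\<lambda>(x,y). (x, y + t*x)) \<circ> (\<lambda>(x::real,y::real). (y,x)))"
    by (auto simp: o_def)
  show ?thesis unfolding e
    by (intro mp_comp lborel_swap lborel_vshear) measurable
qed

lemma hshear_meas2[measurable]: "(\<lambda>(x::real,y::real). (x + t*y, y)) \<in> borel_measurable borel"
  by (intro borel_measurable_continuous_onI) (simp add: case_prod_beta continuous_intros)

lemma lborel_mult_unit:
  fixes u :: complex assumes u: "norm u = 1"
  shows "distr lborel borel (\<lambda>z. u * z) = lborel"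
proof (cases "u = -1")
  case True
  have "lborel = density (distr lborel borel (\<lambda>x::complex. 0 + (-1::real) *\<^sub>R x)) (\<lambda>_. \<bar>-1::real\<bar>^DIM(complex))"
    by (rule lborel_affine) simp
  then show ?thesis using True by (simp add: density_1)
next
  case False
  define a where "a = Re u"
  define b where "b = Im u"
  have ab: "a^2 + b^2 = 1" using u by (simp add: a_def b_def cmod_def)
  have a1: "1 + a \<noteq> 0"
  proof
    assume "1 + a = 0"
    then have "a = -1" by simp
    then have "b = 0" using ab by simp
    then have "u = -1" using \<open>a = -1\<close> by (simp add: a_def b_def complex_eq_iff)
    then show False using False by simp
  qed
  define t where "t = - b / (1 + a)"
  have tb: "1 + t * b = a" unfolding t_def using a1 ab
    by (simp add: field_simps power2_eq_square)
  have tt: "t * (2 + t * b) = - b"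
  proof -
    have e1: "2 + t * b = 1 + a" using tb by simp
    have "t * (1 + a) = - b" unfolding t_def using a1 by simp
    then show ?thesis by (simp only: e1)
  qed
  define H where "H = (\<lambda>(x::real,y::real). (x + t*y, y))"
  define V where "V = (\<lambda>(x::real,y::real). (x, y + b*x))"
  have eq: "(\<lambda>z. u * z) = (\<lambda>(x,y). Complex x y) \<circ> (H \<circ> (V \<circ> (H \<circ> (\<lambda>z::complex. (Re z, Im z)))))"
  proof
    fix z :: complex
    have "Re (u * z) = a * Re z - b * Im z" "Im (u * z) = b * Re z + a * Im z"
      by (simp_all add: a_def b_def)
    moreover have "a * Re z - b * Im z = Re z + t * Im z + t * (Im z + b * (Re z + t * Im z))"
    proof -
      have "Re z + t * Im z + t * (Im z + b * (Re z + t * Im z)) = Re z * (1 + t * b) + Im z * (t * (2 + t * b))"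
        by (simp add: algebra_simps)
      then show ?thesis unfolding tb tt by simp
    qed
    moreover have "b * Re z + a * Im z = Im z + b * (Re z + t * Im z)"
    proof -
      have "Im z + b * (Re z + t * Im z) = b * Re z + Im z * (1 + t * b)"
        by (simp add: algebra_simps)
      then show ?thesis unfolding tb by simp
    qed
    ultimately show "u * z = ((\<lambda>(x,y). Complex x y) \<circ> (H \<circ> (V \<circ> (H \<circ> (\<lambda>z::complex. (Re z, Im z)))))) z"
      by (simp add: H_def V_def complex_eq_iff)
  qed
  have Hm[measurable]: "H \<in> borel_measurable borel" and Vm[measurable]: "V \<in> borel_measurable borel"
    unfolding H_def V_def by measurable
  have dH: "distr lborel borel H = lborel" unfolding H_def by (rule lborel_hshear)
  have dV: "distr lborel borel V = lborel" unfolding V_def by (rule lborel_vshear)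
  show ?thesis unfolding eq
    by (intro mp_comp dH dV lborel_complex_pair lborel_pair_complex) measurable
qed

lemma lborel_rot: "distr lborel borel (rot x0 \<phi>) = lborel"
proof -
  have u: "norm (cis \<phi>) = 1" by simp
  have e: "rot x0 \<phi> = (+) (x0 - cis \<phi> * x0) \<circ> (\<lambda>z. cis \<phi> * z)"
    by (auto simp: rot_def algebra_simps)
  show ?thesis unfolding e
    by (intro mp_comp lborel_mult_unit[OF u] lborel_distr_plus) measurable
qed


lemma vel_inner:
  assumes d: "stream \<alpha> D differentiable (at x)"
  shows "velocity \<alpha> D x \<bullet> w = frechet_derivative (stream \<alpha> D) (at x) (\<i> * w)"
proof -
  define f' where "f' = frechet_derivative (stream \<alpha> D) (at x)"
  have l: "linear f'" unfolding f'_def using d frechet_derivative_works has_derivative_linear by blast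
  have iw: "\<i> * w = (- Im w) *\<^sub>R 1 + Re w *\<^sub>R \<i>" by (simp add: complex_eq_iff)
  have "f' (\<i> * w) = f' ((- Im w) *\<^sub>R 1) + f' (Re w *\<^sub>R \<i>)"
    unfolding iw by (rule linear_add[OF l])
  also have "\<dots> = (- Im w) *\<^sub>R f' 1 + Re w *\<^sub>R f' \<i>"
    by (simp only: linear_scale[OF l])
  finally have "f' (\<i> * w) = - Im w * f' 1 + Re w * f' \<i>" by simp
  moreover have "velocity \<alpha> D x \<bullet> w = Re w * f' \<i> - Im w * f' 1"
    unfolding velocity_def grad_def f'_def[symmetric] by (simp add: inner_complex_def)
  ultimately show ?thesis unfolding f'_def by simp
qed

lemma set_integral_rot:
  fixes f :: "complex \<Rightarrow> 'b::{banach, second_countable_topology}"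
  assumes A: "A \<in> sets lborel" and f[measurable]: "f \<in> borel_measurable borel"
  shows "(LINT x:(rot x0 \<phi> ` A)|lborel. f x) = (LINT x:A|lborel. f (rot x0 \<phi> x))"
proof -
  have Rm[measurable]: "rot x0 \<phi> \<in> borel_measurable borel"
    unfolding rot_def[abs_def] by (intro borel_measurable_continuous_onI continuous_intros)
  have inj: "inj (rot x0 \<phi>)" by (auto simp: rot_def inj_def)
  have img: "rot x0 \<phi> ` A = rot x0 (-\<phi>) -` A"
  proof -
    have "rot x0 (-\<phi>) (rot x0 \<phi> z) = z" "rot x0 \<phi> (rot x0 (-\<phi>) z) = z" for z
      by (simp_all add: rot_def mult.assoc[symmetric] cis_mult)
    then show ?thesis by (auto simp: image_iff) metis
  qed
  have Rm'[measurable]: "rot x0 (-\<phi>) \<in> borel_measurable borel"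
    unfolding rot_def[abs_def] by (intro borel_measurable_continuous_onI continuous_intros)
  have Ai[measurable]: "rot x0 \<phi> ` A \<in> sets borel"
    unfolding img using measurable_sets[OF Rm', of A] A by simp
  have "(LINT x:(rot x0 \<phi> ` A)|lborel. f x) = integral\<^sup>L (distr lborel borel (rot x0 \<phi>)) (\<lambda>x. indicator (rot x0 \<phi> ` A) x *\<^sub>R f x)"
    unfolding set_lebesgue_integral_def by (simp add: lborel_rot)
  also have "\<dots> = (LINT x|lborel. indicator (rot x0 \<phi> ` A) (rot x0 \<phi> x) *\<^sub>R f (rot x0 \<phi> x))"
    by (rule integral_distr) auto
  also have "\<dots> = (LINT x:A|lborel. f (rot x0 \<phi> x))"
    unfolding set_lebesgue_integral_def using inj
    by (intro Bochner_Integration.integral_cong refl) (auto simp: indicator_def inj_image_mem_iff)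
  finally show ?thesis .
qed


theorem corollary3p4:
  fixes \<alpha> :: real and D0 :: "complex set" and x0 :: complex
  assumes "0 < \<alpha>" and "\<alpha> < 1"
    and "rotating_patch \<alpha> D0 x0"
  shows "x0 = (LINT x:D0|lborel. x) / complex_of_real (measure lborel D0)"
proof -
  from assms(3) obtain \<phi> where
    oD: "open D0" and bD: "bounded D0" and neD: "D0 \<noteq> {}" and s\<phi>: "smooth_fun \<phi>" and \<phi>0: "\<phi> 0 = 0"
    and tt: "\<exists>t1\<ge>0. \<exists>t2\<ge>0. \<phi> t1 \<noteq> \<phi> t2" and sol: "gsqg_patch_solution \<alpha> (\<lambda>t. rot x0 (\<phi> t) ` D0) D0"
    unfolding rotating_patch_def by blast
  define Dt where "Dt t = rot x0 (\<phi> t) ` D0" for t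
  have D0m[measurable]: "D0 \<in> sets borel" using oD by simp
  have D0l: "D0 \<in> sets lborel" by simp
  have Dt_facts: "Dt t \<in> sets lborel \<and> bounded (Dt t) \<and> (\<forall>x. stream \<alpha> (Dt t) differentiable (at x))" if "t \<ge> 0" for t
    using sol that unfolding gsqg_patch_solution_def Dt_def by auto
  have deriv: "((\<lambda>s. LINT x:Dt s|lborel. \<psi> x) has_real_derivative
        (LINT x:Dt t|lborel. velocity \<alpha> (Dt t) x \<bullet> grad \<psi> x)) (at t within {0..})"
    if "test_fun \<psi>" "t \<ge> 0" for \<psi> t
    using sol that unfolding gsqg_patch_solution_def Dt_def by auto
  obtain r where r: "0 < r" "D0 \<subseteq> ball 0 r" using bounded_subset_ballD[OF bD] by blast
  define \<rho> where "\<rho> = 2 * norm x0 + r"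
  define a where "a = \<rho>^2"
  have rot_ball: "norm (rot x0 \<theta> z) < \<rho>" if "z \<in> D0" for \<theta> z
  proof -
    have "norm (rot x0 \<theta> z) \<le> norm x0 + norm (cis \<theta> * (z - x0))" unfolding rot_def by (rule norm_triangle_ineq)
    also have "norm (cis \<theta> * (z - x0)) = norm (z - x0)" by (simp add: norm_mult)
    also have "norm (z - x0) \<le> norm z + norm x0" by (rule norm_triangle_ineq4)
    finally show ?thesis using that r by (auto simp: \<rho>_def)
  qed
  have in_a: "norm (rot x0 \<theta> z) ^ 2 < a" if "z \<in> D0" for \<theta> z
    using rot_ball[OF that, of \<theta>] unfolding a_def by (intro power_strict_mono) auto
  have finD0: "emeasure lborel D0 < \<infinity>" by (rule emeasure_bounded_finite[OF bD])
  have rot_meas[measurable]: "rot x0 \<theta> \<in> borel_measurable borel" for \<theta>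
    unfolding rot_def[abs_def] by (intro borel_measurable_continuous_onI continuous_intros)
  have rot_int: "set_integrable lborel D0 (rot x0 \<theta>)" for \<theta>
    unfolding set_integrable_def
  proof (rule integrableI_bounded_set_indicator[where B = \<rho>])
    show "D0 \<in> sets lborel" by simp
    show "rot x0 \<theta> \<in> borel_measurable lborel" by simp
    show "emeasure lborel D0 < \<infinity>" by (rule finD0)
    show "AE x in lborel. x \<in> D0 \<longrightarrow> norm (rot x0 \<theta> x) \<le> \<rho>"
      using rot_ball by (auto intro!: AE_I2 less_imp_le)
  qed
  define V where "V \<theta> = (LINT x:D0|lborel. rot x0 \<theta> x)" for \<theta>
  have psi_meas[measurable]: "psi a w \<in> borel_measurable borel" for w
  proof -
    have "psi a w differentiable_on UNIV" using test_fun_psi[of a w] unfolding test_fun_def by blast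
    then have "continuous_on UNIV (psi a w)" by (rule differentiable_imp_continuous_on)
    then show ?thesis by (rule borel_measurable_continuous_onI)
  qed
  have Vconst: "V (\<phi> t) = V 0" if t0: "t \<ge> 0" for t
  proof -
    have inn: "w \<bullet> V (\<phi> t) = w \<bullet> V 0" for w
    proof -
      define G where "G s = w \<bullet> V (\<phi> s)" for s
      have Geq: "(\<lambda>s. LINT x:Dt s|lborel. psi a w x) = G"
      proof
        fix s
        have "(LINT x:Dt s|lborel. psi a w x) = (LINT x:D0|lborel. psi a w (rot x0 (\<phi> s) x))"
          unfolding Dt_def by (rule set_integral_rot[OF D0l]) simp
        also have "\<dots> = (LINT x:D0|lborel. w \<bullet> rot x0 (\<phi> s) x)"
          by (rule set_lebesgue_integral_cong[OF D0l]) (auto simp: psi_inside(1)[OF in_a])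
        also have "\<dots> = w \<bullet> V (\<phi> s)"
        proof -
          have eq: "(\<lambda>x. indicator D0 x *\<^sub>R (w \<bullet> rot x0 (\<phi> s) x)) = (\<lambda>x. w \<bullet> (indicator D0 x *\<^sub>R rot x0 (\<phi> s) x))"
            by (simp add: inner_scaleR_right)
          show ?thesis unfolding V_def set_lebesgue_integral_def
            by (simp only: eq) (rule integral_inner_right, use rot_int[of "\<phi> s"] in \<open>simp add: set_integrable_def\<close>)
        qed
        finally show "(LINT x:Dt s|lborel. psi a w x) = G s" by (simp add: G_def)
      qed
      have "\<exists>c. \<forall>s\<in>{0..}. G s = c"
      proof (rule has_field_derivative_zero_constant)
        show "convex {0::real..}" by simp
        fix s :: real assume s: "s \<in> {0..}"
        have F: "Dt s \<in> sets lborel" "bounded (Dt s)" "\<And>x. stream \<alpha> (Dt s) differentiable (at x)"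
          using Dt_facts[of s] s by auto
        have "(LINT x:Dt s|lborel. velocity \<alpha> (Dt s) x \<bullet> grad (psi a w) x) =
              (LINT x:Dt s|lborel. frechet_derivative (stream \<alpha> (Dt s)) (at x) (\<i> * w))"
        proof (rule set_lebesgue_integral_cong[OF F(1)], intro allI impI)
          fix x assume "x \<in> Dt s"
          then obtain z where z: "z \<in> D0" "x = rot x0 (\<phi> s) z" by (auto simp: Dt_def)
          have "grad (psi a w) x = w" using psi_inside(2)[OF in_a[OF z(1)]] z by simp
          then show "velocity \<alpha> (Dt s) x \<bullet> grad (psi a w) x = frechet_derivative (stream \<alpha> (Dt s)) (at x) (\<i> * w)"
            using vel_inner[OF F(3)] by simp
        qed
        also have "\<dots> = 0" by (rule grad_int_zero[OF assms(1,2) F])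
        finally have z: "(LINT x:Dt s|lborel. velocity \<alpha> (Dt s) x \<bullet> grad (psi a w) x) = 0" .
        have dd: "((\<lambda>s. LINT x:Dt s|lborel. psi a w x) has_real_derivative
            (LINT x:Dt s|lborel. velocity \<alpha> (Dt s) x \<bullet> grad (psi a w) x)) (at s within {0..})"
          using deriv[OF test_fun_psi[of a w], of s] s by simp
        show "(G has_field_derivative 0) (at s within {0..})"
          using dd unfolding z Geq .
      qed
      then obtain c where "\<forall>s\<in>{0..}. G s = c" by blast
      then have "G t = G 0" using t0 by simp
      then show ?thesis using \<phi>0 by (simp add: G_def)
    qed
    have "(V (\<phi> t) - V 0) \<bullet> (V (\<phi> t) - V 0) = 0"
      using inn[of "V (\<phi> t) - V 0"] by (simp add: inner_diff_right)
    then show ?thesis by simp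
  qed
  define m where "m = (LINT x:D0|lborel. x)"
  define \<mu> where "\<mu> = measure lborel D0"
  have id_int: "set_integrable lborel D0 (\<lambda>x. x)"
  proof -
    have "rot x0 0 = (\<lambda>x. x)" by (auto simp: rot_def)
    then show ?thesis using rot_int[of 0] by simp
  qed
  have Vform: "V \<theta> = complex_of_real \<mu> * (x0 - cis \<theta> * x0) + cis \<theta> * m" for \<theta>
  proof -
    have e: "rot x0 \<theta> = (\<lambda>x. (x0 - cis \<theta> * x0) + cis \<theta> * x)" by (auto simp: rot_def algebra_simps)
    have ci: "set_integrable lborel D0 (\<lambda>x. x0 - cis \<theta> * x0)"
      unfolding set_integrable_def using finD0
      by (intro integrable_scaleR_left integrable_real_indicator) auto
    have mi: "set_integrable lborel D0 (\<lambda>x. cis \<theta> * x)"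
    proof -
      have "(\<lambda>x. indicator D0 x *\<^sub>R (cis \<theta> * x)) = (\<lambda>x. cis \<theta> * (indicator D0 x *\<^sub>R x))"
        by (simp add: mult_scaleR_right)
      then show ?thesis using id_int unfolding set_integrable_def by (simp only:) (rule integrable_mult_right)
    qed
    have "V \<theta> = (LINT x:D0|lborel. (x0 - cis \<theta> * x0)) + (LINT x:D0|lborel. cis \<theta> * x)"
      unfolding V_def e by (rule set_integral_add(2)[OF ci mi])
    also have "(LINT x:D0|lborel. (x0 - cis \<theta> * x0)) = \<mu> *\<^sub>R (x0 - cis \<theta> * x0)"
      unfolding \<mu>_def using finD0 by (intro set_integral_const) auto
    also have "(LINT x:D0|lborel. cis \<theta> * x) = cis \<theta> * m" unfolding m_def by simp
    finally show ?thesis by (simp add: scaleR_conv_of_real)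
  qed
  have \<mu>pos: "\<mu> > 0"
  proof -
    obtain z where z: "z \<in> D0" using neD by blast
    obtain e where e: "e > 0" "ball z e \<subseteq> D0" using oD z open_contains_ball by blast
    have "emeasure lborel (ball z e) \<le> emeasure lborel D0" using e(2) by (intro emeasure_mono) auto
    moreover have "emeasure lborel (ball z e) = ennreal (pi * e^2)" using e(1) by (simp add: emeasure_ball_complex)
    moreover have "emeasure lborel D0 = ennreal \<mu>"
      unfolding \<mu>_def using finD0 by (intro emeasure_eq_ennreal_measure) simp
    ultimately have "ennreal (pi * e^2) \<le> ennreal \<mu>" by simp
    moreover have "pi * e^2 > 0" using e(1) by simp
    ultimately show ?thesis
      by (metis ennreal_le_iff2 ennreal_less_zero_iff measure_nonneg not_le \<mu>_def order_less_le_trans)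
  qed
  have key: "complex_of_real \<mu> * x0 = m"
  proof (rule ccontr)
    assume ne: "complex_of_real \<mu> * x0 \<noteq> m"
    have c1: "cis (\<phi> t) = 1" if "t \<ge> 0" for t
    proof -
      have "complex_of_real \<mu> * (x0 - cis (\<phi> t) * x0) + cis (\<phi> t) * m = complex_of_real \<mu> * (x0 - cis 0 * x0) + cis 0 * m"
        using Vconst[OF that] Vform[of "\<phi> t"] Vform[of 0] by simp
      then have "(1 - cis (\<phi> t)) * (complex_of_real \<mu> * x0 - m) = 0" by (simp add: algebra_simps)
      then show ?thesis using ne by simp
    qed
    from s\<phi> obtain g where g0: "g 0 = \<phi>" and gd: "\<And>k t. (g k has_vector_derivative g (Suc k) t) (at t)"
      unfolding smooth_fun_def by blast
    have cont\<phi>: "continuous_on {0..} \<phi>"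
      using gd[of 0] g0 by (intro continuous_at_imp_continuous_on ballI) (metis has_vector_derivative_continuous)
    have conn: "connected (\<phi> ` {0..})" by (rule connected_continuous_image[OF cont\<phi>]) simp
    obtain t1 t2 where t12: "t1 \<ge> 0" "t2 \<ge> 0" "\<phi> t1 \<noteq> \<phi> t2" using tt by blast
    define p where "p = min (\<phi> t1) (\<phi> t2)"
    define q where "q = max (\<phi> t1) (\<phi> t2)"
    have pq: "p < q" using t12 by (auto simp: p_def q_def)
    have pS: "p \<in> \<phi> ` {0..}" and qS: "q \<in> \<phi> ` {0..}" using t12 by (auto simp: p_def q_def min_def max_def)
    define \<delta> where "\<delta> = min pi ((q - p) / 2)"
    have d0: "0 < \<delta>" "\<delta> \<le> pi" "p + \<delta> \<le> q"
    proof -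
      have "\<delta> \<le> (q - p) / 2" unfolding \<delta>_def by (rule min.cobounded2)
      then show "p + \<delta> \<le> q" using pq by (simp add: field_simps)
    qed (use pq in \<open>auto simp: \<delta>_def\<close>)
    have "p + \<delta> \<in> \<phi> ` {0..}" using conn pS qS d0 unfolding connected_iff_interval by auto
    then obtain s where s: "s \<ge> 0" "\<phi> s = p + \<delta>" by auto
    obtain s' where s': "s' \<ge> 0" "\<phi> s' = p" using pS by auto
    have "cis p * cis \<delta> = cis (p + \<delta>)" by (simp add: cis_mult)
    also have "\<dots> = 1" using c1[OF s(1)] s(2) by simp
    finally have "cis \<delta> = 1" using c1[OF s'(1)] s'(2) by simp
    then have "cos \<delta> = 1" by (simp add: complex_eq_iff)
    moreover have "cos \<delta> < cos 0" using d0 by (intro cos_monotone_0_pi) auto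
    ultimately show False by simp
  qed
  show ?thesis using key \<mu>pos unfolding m_def \<mu>_def by (simp add: field_simps)
qed


end
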